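(* Let $\Phi$ be a Leonard system in $\mathcal A$ with parameter array $(\theta_i,\theta^*_i,i=0..d;\varphi_j,\phi_j,j=1..d)$ and let $x_i=\mathrm{tr}(E^*_iAE^*_{i-1}A)$ $(1\le i\le d)$. Then $$x_i=\varphi_i\phi_i\frac{\tau^*_{i-1}(\theta^*_{i-1})\,\eta^*_{d-i}(\theta^*_i)}{\tau^*_i(\theta^*_i)\,\eta^*_{d-i+1}(\theta^*_{i-1})}\qquad(1\le i\le d).$$
   Context: Let $\mathbb K$ be a field, $d\ge 0$ an integer, and $\mathcal A$ a $\mathbb K$-algebra isomorphic to $\mathrm{Mat}_{d+1}(\mathbb K)$, with identity $I$ and trace $\mathrm{tr}$. An element $A\in\mathcal A$ is multiplicity-free if it has $d+1$ mutually distinct eigenvalues in $\mathbb K$; if $\theta_0,\dots,\theta_d$ is an ordering of them, the primitive idempotent of $A$ associated with $\theta_i$ is $E_i=\prod_{j\ne i}(A-\theta_jI)/(\theta_i-\theta_j)$. A Leonard system in $\mathcal A$ is a sequence $\Phi=(A;A^*;\{E_i\}_{i=0}^d;\{E^*_i\}_{i=0}^d)$ such that: (i) $A,A^*$ are multiplicity-free; (ii) $E_0,\dots,E_d$ is an ordering of the primitive idempotents of $A$; (iii) $E^*_0,\dots,E^*_d$ is an ordering of those of $A^*$; (iv) $E_iA^*E_j=0$ if $|i-j|>1$ and $\ne0$ if $|i-j|=1$ $(0\le i,j\le d)$; (v) $E^*_iAE^*_j=0$ if $|i-j|>1$ and $\neq0$ if $|i-j|=1$ $(0\le i,j\le d)$.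 $\theta_i$ (resp. $\theta^*_i$) is the eigenvalue of $A$ (resp. $A^*$) for $E_i$ (resp. $E^*_i$). It is known that there exist unique nonzero scalars $\varphi_1,\dots,\varphi_d\in\mathbb K$ (first split sequence) such that for some $\mathbb K$-algebra isomorphism $\natural:\mathcal A\to\mathrm{Mat}_{d+1}(\mathbb K)$, $A^\natural$ is lower bidiagonal with diagonal $\theta_0,\dots,\theta_d$ and subdiagonal entries all $1$, and $A^{*\natural}$ is upper bidiagonal with diagonal $\theta^*_0,\dots,\theta^*_d$ and $(A^{*\natural})_{i-1,i}=\varphi_i$. The second split sequence $\phi_1,\dots,\phi_d$ is the first split sequence of $(A;A^*;\{E_{d-i}\}_{i=0}^d;\{E^*_i\}_{i=0}^d)$. Polynomials: $\tau^*_i=\prod_{h=0}^{i-1}(\lambda-\theta^*_h)$, $\eta^*_i=\prod_{h=0}^{i-1}(\lambda-\theta^*_{d-h})$. *)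

theory Defs
  imports "Jordan_Normal_Form.Matrix" "Jordan_Normal_Form.Char_Poly"
begin

text \<open>We take the algebra to be Mat_{d+1}(K) itself (n = d+1).\<close>

definition mat_tr :: "'a::comm_ring_1 mat \<Rightarrow> 'a" where
  "mat_tr M = (\<Sum>i<dim_row M. M $$ (i, i))"

definition multiplicity_free :: "nat \<Rightarrow> 'a::field mat \<Rightarrow> bool" where
  "multiplicity_free d A \<longleftrightarrow>
     (\<exists>\<theta>::nat \<Rightarrow> 'a. inj_on \<theta> {0..d} \<and> (\<forall>i\<le>d. eigenvalue A (\<theta> i)))"

definition prim_idem :: "nat \<Rightarrow> 'a::field mat \<Rightarrow> (nat \<Rightarrow> 'a) \<Rightarrow> nat \<Rightarrow> 'a mat" where
  "prim_idem d A \<theta> i =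
     foldr (\<lambda>j M. ((1 / (\<theta> i - \<theta> j)) \<cdot>\<^sub>m (A - \<theta> j \<cdot>\<^sub>m 1\<^sub>m (Suc d))) * M)
           (filter (\<lambda>j. j \<noteq> i) [0..<Suc d]) (1\<^sub>m (Suc d))"

definition eigen_ordering :: "nat \<Rightarrow> 'a::field mat \<Rightarrow> (nat \<Rightarrow> 'a) \<Rightarrow> bool" where
  "eigen_ordering d A \<theta> \<longleftrightarrow> A \<in> carrier_mat (Suc d) (Suc d) \<and>
     inj_on \<theta> {0..d} \<and> (\<forall>i\<le>d. eigenvalue A (\<theta> i)) \<and>
     (\<forall>k. eigenvalue A k \<longrightarrow> k \<in> \<theta> ` {0..d})"

text \<open>Leonard system (A; A*; E_i; E*_i) with E_i = prim_idem d A \<theta> i,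
  E*_i = prim_idem d As \<theta>s i.\<close>
definition leonard_system ::
  "nat \<Rightarrow> 'a::field mat \<Rightarrow> 'a mat \<Rightarrow> (nat \<Rightarrow> 'a) \<Rightarrow> (nat \<Rightarrow> 'a) \<Rightarrow> bool" where
  "leonard_system d A As \<theta> \<theta>s \<longleftrightarrow>
     multiplicity_free d A \<and> multiplicity_free d As \<and>
     eigen_ordering d A \<theta> \<and> eigen_ordering d As \<theta>s \<and>
     (\<forall>i\<le>d. \<forall>j\<le>d.
        (1 < \<bar>int i - int j\<bar> \<longrightarrow> prim_idem d A \<theta> i * As * prim_idem d A \<theta> j = 0\<^sub>m (Suc d) (Suc d)) \<and>
        (\<bar>int i - int j\<bar> = 1 \<longrightarrow> prim_idem d A \<theta> i * As * prim_idem d A \<theta> j \<noteq> 0\<^sub>m (Suc d) (Suc d))) \<and>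
     (\<forall>i\<le>d. \<forall>j\<le>d.
        (1 < \<bar>int i - int j\<bar> \<longrightarrow> prim_idem d As \<theta>s i * A * prim_idem d As \<theta>s j = 0\<^sub>m (Suc d) (Suc d)) \<and>
        (\<bar>int i - int j\<bar> = 1 \<longrightarrow> prim_idem d As \<theta>s i * A * prim_idem d As \<theta>s j \<noteq> 0\<^sub>m (Suc d) (Suc d)))"

definition alg_iso :: "nat \<Rightarrow> ('a::field mat \<Rightarrow> 'a mat) \<Rightarrow> bool" where
  "alg_iso n f \<longleftrightarrow> bij_betw f (carrier_mat n n) (carrier_mat n n) \<and>
     (\<forall>X\<in>carrier_mat n n. \<forall>Y\<in>carrier_mat n n.
        f (X + Y) = f X + f Y \<and> f (X * Y) = f X * f Y) \<and>
     (\<forall>c. \<forall>X\<in>carrier_mat n n. f (c \<cdot>\<^sub>m X) = c \<cdot>\<^sub>m f X) \<and>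
     f (1\<^sub>m n) = 1\<^sub>m n"

definition lower_bidiag :: "nat \<Rightarrow> (nat \<Rightarrow> 'a::field) \<Rightarrow> 'a mat" where
  "lower_bidiag d \<theta> = mat (Suc d) (Suc d)
     (\<lambda>(r, c). if r = c then \<theta> r else if r = Suc c then 1 else 0)"

definition upper_bidiag :: "nat \<Rightarrow> (nat \<Rightarrow> 'a::field) \<Rightarrow> (nat \<Rightarrow> 'a) \<Rightarrow> 'a mat" where
  "upper_bidiag d \<theta>s \<phi> = mat (Suc d) (Suc d)
     (\<lambda>(r, c). if r = c then \<theta>s r else if c = Suc r then \<phi> c else 0)"

definition first_split_seq ::
  "nat \<Rightarrow> 'a::field mat \<Rightarrow> 'a mat \<Rightarrow> (nat \<Rightarrow> 'a) \<Rightarrow> (nat \<Rightarrow> 'a) \<Rightarrow> (nat \<Rightarrow> 'a) \<Rightarrow> bool" where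
  "first_split_seq d A As \<theta> \<theta>s \<phi> \<longleftrightarrow>
     (\<forall>i. 1 \<le> i \<and> i \<le> d \<longrightarrow> \<phi> i \<noteq> 0) \<and>
     (\<exists>f. alg_iso (Suc d) f \<and> f A = lower_bidiag d \<theta> \<and> f As = upper_bidiag d \<theta>s \<phi>)"

definition tau_s :: "(nat \<Rightarrow> 'a::field) \<Rightarrow> nat \<Rightarrow> 'a \<Rightarrow> 'a" where
  "tau_s \<theta>s i x = (\<Prod>h<i. x - \<theta>s h)"

definition eta_s :: "nat \<Rightarrow> (nat \<Rightarrow> 'a::field) \<Rightarrow> nat \<Rightarrow> 'a \<Rightarrow> 'a" where
  "eta_s d \<theta>s i x = (\<Prod>h<i. x - \<theta>s (d - h))"

end

theory Submission
  imports Defs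
begin


declare minus_carrier_mat[simp]

lemma mult_entry:
  assumes "A \<in> carrier_mat n m" "B \<in> carrier_mat m p" "i < n" "j < p"
  shows "(A * B) $$ (i,j) = (\<Sum>k<m. A $$ (i,k) * B $$ (k,j))"
  using assms by (auto simp: scalar_prod_def lessThan_atLeast0 intro!: sum.cong)

lemma smult_smult_mat': "a \<cdot>\<^sub>m (b \<cdot>\<^sub>m A) = (a * b) \<cdot>\<^sub>m (A :: 'a::semigroup_mult mat)"
  by (rule eq_matI) (auto simp: mult.assoc)

lemma one_smult_mat': "1 \<cdot>\<^sub>m A = (A :: 'a::monoid_mult mat)"
  by (rule eq_matI) auto

lemma mat_tr_comm:
  fixes A B :: "'a::comm_ring_1 mat"
  assumes "A \<in> carrier_mat n m" "B \<in> carrier_mat m n"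
  shows "mat_tr (A * B) = mat_tr (B * A)"
proof -
  have "mat_tr (A * B) = (\<Sum>i<n. \<Sum>k<m. A $$ (i,k) * B $$ (k,i))"
    unfolding mat_tr_def using assms by (auto simp del: index_mult_mat(1) simp: mult_entry[OF assms] mult_entry[OF assms(2,1)] intro!: sum.cong)
  also have "\<dots> = (\<Sum>k<m. \<Sum>i<n. B $$ (k,i) * A $$ (i,k))"
    by (subst sum.swap) (simp add: mult.commute)
  also have "\<dots> = mat_tr (B * A)"
    unfolding mat_tr_def using assms by (auto simp del: index_mult_mat(1) simp: mult_entry[OF assms] mult_entry[OF assms(2,1)] intro!: sum.cong)
  finally show ?thesis .
qed

lemma mat_tr_smult: "A \<in> carrier_mat n n \<Longrightarrow> mat_tr (c \<cdot>\<^sub>m A) = c * mat_tr A"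
  unfolding mat_tr_def by (simp add: sum_distrib_left)

lemma mat_tr_add: "A \<in> carrier_mat n n \<Longrightarrow> B \<in> carrier_mat n n \<Longrightarrow> mat_tr (A + B) = mat_tr A + mat_tr B"
  unfolding mat_tr_def by (simp add: sum.distrib)

lemma mat_tr_minus: "A \<in> carrier_mat n n \<Longrightarrow> B \<in> carrier_mat n n \<Longrightarrow> mat_tr (A - B) = mat_tr A - mat_tr B"
  unfolding mat_tr_def by (simp add: sum_subtractf)

lemma foldr_carrier:
  fixes h :: "nat \<Rightarrow> 'a::field mat"
  assumes "\<And>k. k \<in> set ks \<Longrightarrow> h k \<in> carrier_mat n n" "B \<in> carrier_mat n m"
  shows "foldr (\<lambda>k M. h k * M) ks B \<in> carrier_mat n m"
  using assms by (induction ks) (auto intro: mult_carrier_mat)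

lemma foldr_mult:
  fixes h :: "nat \<Rightarrow> 'a::field mat"
  assumes "\<And>k. k \<in> set ks \<Longrightarrow> h k \<in> carrier_mat n n" "B \<in> carrier_mat n m"
  shows "foldr (\<lambda>k M. h k * M) ks B = foldr (\<lambda>k M. h k * M) ks (1\<^sub>m n) * B"
  using assms
proof (induction ks)
  case Nil then show ?case by (simp add: left_mult_one_mat)
next
  case (Cons a ks)
  have c: "foldr (\<lambda>k M. h k * M) ks (1\<^sub>m n) \<in> carrier_mat n n"
    using Cons by (intro foldr_carrier) auto
  have "foldr (\<lambda>k M. h k * M) (a#ks) B = h a * (foldr (\<lambda>k M. h k * M) ks (1\<^sub>m n) * B)"
    using Cons by simp
  also have "\<dots> = h a * foldr (\<lambda>k M. h k * M) ks (1\<^sub>m n) * B"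
    using Cons c by (subst assoc_mult_mat[of _ n n _ n _ m]) auto
  finally show ?case by simp
qed

lemma foldr_append_mat:
  fixes h :: "nat \<Rightarrow> 'a::field mat"
  assumes "\<And>k. k \<in> set (xs @ ys) \<Longrightarrow> h k \<in> carrier_mat n n"
  shows "foldr (\<lambda>k M. h k * M) (xs @ ys) (1\<^sub>m n) =
         foldr (\<lambda>k M. h k * M) xs (1\<^sub>m n) * foldr (\<lambda>k M. h k * M) ys (1\<^sub>m n)"
  using assms by (simp, subst foldr_mult[of xs h n _ n]) (auto intro: foldr_carrier)

lemma foldr_commute:
  fixes h :: "nat \<Rightarrow> 'a::field mat"
  assumes "\<And>k. k \<in> set ks \<Longrightarrow> h k \<in> carrier_mat n n" "Y \<in> carrier_mat n n"
    "\<And>k. k \<in> set ks \<Longrightarrow> Y * h k = h k * Y"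
  shows "Y * foldr (\<lambda>k M. h k * M) ks (1\<^sub>m n) = foldr (\<lambda>k M. h k * M) ks (1\<^sub>m n) * Y"
  using assms
proof (induction ks)
  case Nil then show ?case by (simp add: left_mult_one_mat right_mult_one_mat)
next
  case (Cons a ks)
  let ?F = "foldr (\<lambda>k M. h k * M) ks (1\<^sub>m n)"
  have c: "?F \<in> carrier_mat n n" using Cons by (intro foldr_carrier) auto
  have ha: "h a \<in> carrier_mat n n" using Cons by auto
  have Yc: "Y \<in> carrier_mat n n" using Cons by auto
  have e1: "Y * h a = h a * Y" using Cons.prems(3) by simp
  have e2: "Y * ?F = ?F * Y" using Cons by auto
  have "Y * (h a * ?F) = (Y * h a) * ?F" by (rule assoc_mult_mat[OF Yc ha c, symmetric])
  also have "\<dots> = (h a * Y) * ?F" by (simp only: e1)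
  also have "\<dots> = h a * (Y * ?F)" by (rule assoc_mult_mat[OF ha Yc c])
  also have "\<dots> = h a * (?F * Y)" by (simp only: e2)
  also have "\<dots> = (h a * ?F) * Y" by (rule assoc_mult_mat[OF ha c Yc, symmetric])
  finally have "Y * (h a * ?F) = (h a * ?F) * Y" .
  then show ?case by (simp only: foldr_Cons comp_def)
qed

lemma foldr_smult:
  fixes g :: "nat \<Rightarrow> 'a::field mat"
  assumes "\<And>k. k \<in> set ks \<Longrightarrow> g k \<in> carrier_mat n n"
  shows "foldr (\<lambda>k M. (c k \<cdot>\<^sub>m g k) * M) ks (1\<^sub>m n) =
         prod_list (map c ks) \<cdot>\<^sub>m foldr (\<lambda>k M. g k * M) ks (1\<^sub>m n)"
  using assms
proof (induction ks)
  case Nil then show ?case by (simp add: one_smult_mat')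
next
  case (Cons a ks)
  let ?F = "foldr (\<lambda>k M. g k * M) ks (1\<^sub>m n)"
  have c: "?F \<in> carrier_mat n n" using Cons by (intro foldr_carrier) auto
  have ga: "g a \<in> carrier_mat n n" using Cons by auto
  have "(c a \<cdot>\<^sub>m g a) * (prod_list (map c ks) \<cdot>\<^sub>m ?F) = (c a * prod_list (map c ks)) \<cdot>\<^sub>m (g a * ?F)"
    using c ga by (simp add: mult_smult_distrib mult_smult_assoc_mat[of _ n n _ n] smult_smult_mat')
  then show ?case using Cons by simp
qed

lemma foldr_eigen:
  fixes A :: "'a::field mat"
  assumes A: "A \<in> carrier_mat n n" and Y: "Y \<in> carrier_mat n m" and AY: "A * Y = \<mu> \<cdot>\<^sub>m Y"
  shows "foldr (\<lambda>k M. (c k \<cdot>\<^sub>m (A - a k \<cdot>\<^sub>m 1\<^sub>m n)) * M) ks Y =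
         prod_list (map (\<lambda>k. c k * (\<mu> - a k)) ks) \<cdot>\<^sub>m Y"
proof (induction ks)
  case Nil then show ?case by (simp add: one_smult_mat')
next
  case (Cons b ks)
  let ?p = "prod_list (map (\<lambda>k. c k * (\<mu> - a k)) ks)"
  have "(c b \<cdot>\<^sub>m (A - a b \<cdot>\<^sub>m 1\<^sub>m n)) * (?p \<cdot>\<^sub>m Y) = (c b * (\<mu> - a b) * ?p) \<cdot>\<^sub>m Y"
  proof -
    have "(A - a b \<cdot>\<^sub>m 1\<^sub>m n) * Y = A * Y - a b \<cdot>\<^sub>m Y"
      using A Y by (simp add: minus_mult_distrib_mat[of _ n n] mult_smult_assoc_mat[of _ n n _ m])
    also have "\<dots> = (\<mu> - a b) \<cdot>\<^sub>m Y" using AY Y by (auto simp: algebra_simps)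
    finally have e: "(A - a b \<cdot>\<^sub>m 1\<^sub>m n) * Y = (\<mu> - a b) \<cdot>\<^sub>m Y" .
    have "(c b \<cdot>\<^sub>m (A - a b \<cdot>\<^sub>m 1\<^sub>m n)) * (?p \<cdot>\<^sub>m Y) = (c b * ?p) \<cdot>\<^sub>m ((A - a b \<cdot>\<^sub>m 1\<^sub>m n) * Y)"
      using A Y by (simp add: mult_smult_distrib[of _ n n _ m] mult_smult_assoc_mat[of _ n n _ m] smult_smult_mat' mult.commute)
    also have "\<dots> = (c b * (\<mu> - a b) * ?p) \<cdot>\<^sub>m Y" using e by (simp add: smult_smult_mat' mult_ac)
    finally show ?thesis .
  qed
  then show ?case using Cons by simp
qed


lemma iso_carrier: "alg_iso n f \<Longrightarrow> X \<in> carrier_mat n n \<Longrightarrow> f X \<in> carrier_mat n n"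
  unfolding alg_iso_def bij_betw_def by auto

lemma iso_inj: "alg_iso n f \<Longrightarrow> X \<in> carrier_mat n n \<Longrightarrow> Y \<in> carrier_mat n n \<Longrightarrow> f X = f Y \<Longrightarrow> X = Y"
  unfolding alg_iso_def bij_betw_def inj_on_def by auto

lemma iso_add: "alg_iso n f \<Longrightarrow> X \<in> carrier_mat n n \<Longrightarrow> Y \<in> carrier_mat n n \<Longrightarrow> f (X + Y) = f X + f Y"
  unfolding alg_iso_def by auto

lemma iso_mult: "alg_iso n f \<Longrightarrow> X \<in> carrier_mat n n \<Longrightarrow> Y \<in> carrier_mat n n \<Longrightarrow> f (X * Y) = f X * f Y"
  unfolding alg_iso_def by auto

lemma iso_smult: "alg_iso n f \<Longrightarrow> X \<in> carrier_mat n n \<Longrightarrow> f (c \<cdot>\<^sub>m X) = c \<cdot>\<^sub>m f X"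
  unfolding alg_iso_def by auto

lemma iso_one: "alg_iso n f \<Longrightarrow> f (1\<^sub>m n) = 1\<^sub>m n"
  unfolding alg_iso_def by auto

lemma zero_smult_one: "(0::'a::field) \<cdot>\<^sub>m 1\<^sub>m n = 0\<^sub>m n n"
  by (rule eq_matI) auto

lemma iso_zero:
  fixes f :: "'a::field mat \<Rightarrow> 'a mat"
  assumes "alg_iso n f" shows "f (0\<^sub>m n n) = 0\<^sub>m n n"
proof -
  have "f (0\<^sub>m n n) = f (0 \<cdot>\<^sub>m 1\<^sub>m n)" by (simp add: zero_smult_one)
  also have "\<dots> = 0 \<cdot>\<^sub>m 1\<^sub>m n" using assms by (simp add: iso_smult iso_one)
  finally show ?thesis by (simp add: zero_smult_one)
qed

lemma minus_as_add: "X \<in> carrier_mat n m \<Longrightarrow> Y \<in> carrier_mat n m \<Longrightarrow> X - Y = X + (-1 :: 'a::field) \<cdot>\<^sub>m Y"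
  by (rule eq_matI) auto

lemma iso_minus:
  fixes f :: "'a::field mat \<Rightarrow> 'a mat"
  assumes "alg_iso n f" "X \<in> carrier_mat n n" "Y \<in> carrier_mat n n"
  shows "f (X - Y) = f X - f Y"
proof -
  have "f (X - Y) = f (X + (-1) \<cdot>\<^sub>m Y)" using assms by (simp add: minus_as_add)
  also have "\<dots> = f X + (-1) \<cdot>\<^sub>m f Y" using assms by (simp add: iso_add iso_smult)
  also have "\<dots> = f X - f Y" using assms by (simp add: minus_as_add[OF iso_carrier[OF assms(1,2)] iso_carrier[OF assms(1,3)]])
  finally show ?thesis .
qed

lemma iso_nonzero:
  fixes f :: "'a::field mat \<Rightarrow> 'a mat"
  assumes "alg_iso n f" "X \<in> carrier_mat n n" "X \<noteq> 0\<^sub>m n n"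
  shows "f X \<noteq> 0\<^sub>m n n"
  using assms iso_inj[OF assms(1) assms(2), of "0\<^sub>m n n"] iso_zero[OF assms(1)] by auto

lemma iso_foldr:
  fixes f :: "'a::field mat \<Rightarrow> 'a mat" and ks :: "nat list"
  assumes f: "alg_iso n f" and h: "\<And>k. k \<in> set ks \<Longrightarrow> h k \<in> carrier_mat n n"
  shows "f (foldr (\<lambda>k M. h k * M) ks (1\<^sub>m n)) = foldr (\<lambda>k M. f (h k) * M) ks (1\<^sub>m n)"
  using h
proof (induction ks)
  case Nil then show ?case using f by (simp add: iso_one)
next
  case (Cons a ks)
  have c: "foldr (\<lambda>k M. h k * M) ks (1\<^sub>m n) \<in> carrier_mat n n"
    by (rule foldr_carrier) (use Cons.prems in auto)
  show ?case using Cons c f by (simp add: iso_mult)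
qed

lemma prim_idem_carrier:
  "M \<in> carrier_mat (Suc d) (Suc d) \<Longrightarrow> prim_idem d M \<mu> j \<in> carrier_mat (Suc d) (Suc d)"
  unfolding prim_idem_def by (rule foldr_carrier) auto

lemma iso_prim_idem:
  fixes f :: "'a::field mat \<Rightarrow> 'a mat"
  assumes f: "alg_iso (Suc d) f" and M: "M \<in> carrier_mat (Suc d) (Suc d)"
  shows "f (prim_idem d M \<mu> j) = prim_idem d (f M) \<mu> j"
  unfolding prim_idem_def
  using f M by (subst iso_foldr[OF f]) (auto simp: iso_smult iso_minus iso_one)

lemma upper_bidiag_carrier[simp]: "upper_bidiag d \<delta> \<sigma> \<in> carrier_mat (Suc d) (Suc d)"
  unfolding upper_bidiag_def by simp

lemma lower_bidiag_carrier[simp]: "lower_bidiag d \<delta> \<in> carrier_mat (Suc d) (Suc d)"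
  unfolding lower_bidiag_def by simp

lemma upper_bidiag_dim[simp]: "dim_row (upper_bidiag d \<delta> \<sigma>) = Suc d" "dim_col (upper_bidiag d \<delta> \<sigma>) = Suc d"
  unfolding upper_bidiag_def by simp_all

lemma lower_bidiag_dim[simp]: "dim_row (lower_bidiag d \<delta>) = Suc d" "dim_col (lower_bidiag d \<delta>) = Suc d"
  unfolding lower_bidiag_def by simp_all

lemma upper_bidiag_index:
  "r \<le> d \<Longrightarrow> c \<le> d \<Longrightarrow> upper_bidiag d \<delta> \<sigma> $$ (r,c) = (if r = c then \<delta> r else if c = Suc r then \<sigma> c else 0)"
  unfolding upper_bidiag_def by simp

lemma lower_bidiag_index:
  "r \<le> d \<Longrightarrow> c \<le> d \<Longrightarrow> lower_bidiag d \<delta> $$ (r,c) = (if r = c then \<delta> r else if r = Suc c then 1 else 0)"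
  unfolding lower_bidiag_def by simp

lemma transpose_lower_bidiag: "transpose_mat (lower_bidiag d \<delta>) = upper_bidiag d \<delta> (\<lambda>_. 1)"
  by (rule eq_matI) (auto simp: lower_bidiag_index upper_bidiag_index)

lemma upper_mult_entry:
  fixes \<delta> \<sigma> :: "nat \<Rightarrow> 'a::field"
  assumes P: "P \<in> carrier_mat (Suc d) m" and r: "r \<le> d" and c: "c < m"
  shows "(upper_bidiag d \<delta> \<sigma> * P) $$ (r,c) = \<delta> r * P $$ (r,c) + (if r < d then \<sigma> (Suc r) * P $$ (Suc r, c) else 0)"
proof -
  have "(upper_bidiag d \<delta> \<sigma> * P) $$ (r,c) = (\<Sum>k<Suc d. upper_bidiag d \<delta> \<sigma> $$ (r,k) * P $$ (k,c))"
    using P r c by (intro mult_entry[where n="Suc d" and m="Suc d"]) auto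
  also have "\<dots> = (\<Sum>k<Suc d. (if k = r then \<delta> r * P $$ (r,c) else 0) + (if k = Suc r then \<sigma> (Suc r) * P $$ (Suc r, c) else 0))"
    using r by (intro sum.cong) (auto simp: upper_bidiag_index)
  also have "\<dots> = \<delta> r * P $$ (r,c) + (if r < d then \<sigma> (Suc r) * P $$ (Suc r, c) else 0)"
    using r by (simp add: sum.distrib)
  finally show ?thesis .
qed

lemma mult_upper_entry:
  fixes \<delta> \<sigma> :: "nat \<Rightarrow> 'a::field"
  assumes P: "P \<in> carrier_mat m (Suc d)" and r: "r < m" and c: "c \<le> d"
  shows "(P * upper_bidiag d \<delta> \<sigma>) $$ (r,c) = P $$ (r,c) * \<delta> c + (if 0 < c then P $$ (r, c - 1) * \<sigma> c else 0)"
proof -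
  have "(P * upper_bidiag d \<delta> \<sigma>) $$ (r,c) = (\<Sum>k<Suc d. P $$ (r,k) * upper_bidiag d \<delta> \<sigma> $$ (k,c))"
    using P r c by (intro mult_entry[OF P upper_bidiag_carrier r]) auto
  also have "\<dots> = (\<Sum>k<Suc d. (if k = c then P $$ (r,c) * \<delta> c else 0) + (if k = c - 1 \<and> 0 < c then P $$ (r, c - 1) * \<sigma> c else 0))"
    using c by (intro sum.cong) (auto simp: upper_bidiag_index)
  also have "\<dots> = P $$ (r,c) * \<delta> c + (if 0 < c then P $$ (r, c - 1) * \<sigma> c else 0)"
    using c by (auto simp: sum.distrib)
  finally show ?thesis .
qed

lemma lower_mult_entry:
  fixes \<delta> :: "nat \<Rightarrow> 'a::field"
  assumes P: "P \<in> carrier_mat (Suc d) m" and r: "r \<le> d" and c: "c < m"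
  shows "(lower_bidiag d \<delta> * P) $$ (r,c) = \<delta> r * P $$ (r,c) + (if 0 < r then P $$ (r - 1, c) else 0)"
proof -
  have "(lower_bidiag d \<delta> * P) $$ (r,c) = (\<Sum>k<Suc d. lower_bidiag d \<delta> $$ (r,k) * P $$ (k,c))"
    using P r c by (intro mult_entry[where n="Suc d" and m="Suc d"]) auto
  also have "\<dots> = (\<Sum>k<Suc d. (if k = r then \<delta> r * P $$ (r,c) else 0) + (if k = r - 1 \<and> 0 < r then P $$ (r - 1, c) else 0))"
    using r by (intro sum.cong) (auto simp: lower_bidiag_index)
  also have "\<dots> = \<delta> r * P $$ (r,c) + (if 0 < r then P $$ (r - 1, c) else 0)"
    using r by (auto simp: sum.distrib)
  finally show ?thesis .
qed

lemma mult_lower_entry: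
  fixes \<delta> :: "nat \<Rightarrow> 'a::field"
  assumes P: "P \<in> carrier_mat m (Suc d)" and r: "r < m" and c: "c \<le> d"
  shows "(P * lower_bidiag d \<delta>) $$ (r,c) = P $$ (r,c) * \<delta> c + (if c < d then P $$ (r, Suc c) else 0)"
proof -
  have "(P * lower_bidiag d \<delta>) $$ (r,c) = (\<Sum>k<Suc d. P $$ (r,k) * lower_bidiag d \<delta> $$ (k,c))"
    using P r c by (intro mult_entry[OF P lower_bidiag_carrier r]) auto
  also have "\<dots> = (\<Sum>k<Suc d. (if k = c then P $$ (r,c) * \<delta> c else 0) + (if k = Suc c then P $$ (r, Suc c) else 0))"
    using c by (intro sum.cong) (auto simp: lower_bidiag_index)
  also have "\<dots> = P $$ (r,c) * \<delta> c + (if c < d then P $$ (r, Suc c) else 0)"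
    using c by (simp add: sum.distrib)
  finally show ?thesis .
qed


lemma inj_neq: fixes a b d :: nat shows "inj_on \<delta> {0..d} \<Longrightarrow> a \<le> d \<Longrightarrow> b \<le> d \<Longrightarrow> a \<noteq> b \<Longrightarrow> \<delta> a \<noteq> \<delta> b"
  using inj_on_contraD[of \<delta> "{0..d}" a b] by auto

lemma rker_zero:
  fixes \<delta> \<sigma> x :: "nat \<Rightarrow> 'a::field"
  assumes inj: "inj_on \<delta> {0..d}" and j: "j \<le> d"
    and eq: "\<And>r. r \<le> d \<Longrightarrow> \<delta> r * x r + (if r < d then \<sigma> (Suc r) * x (Suc r) else 0) = \<delta> j * x r"
  shows "j < r \<Longrightarrow> r \<le> d \<Longrightarrow> x r = 0"
proof (induction "d - r" arbitrary: r)
  case 0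
  then have r: "r = d" by simp
  have "\<delta> d * x d = \<delta> j * x d" using eq[of d] by simp
  then have "(\<delta> d - \<delta> j) * x d = 0" by (simp add: algebra_simps)
  moreover have "\<delta> d \<noteq> \<delta> j" using inj_neq[OF inj, of d j] 0 r by auto
  ultimately show ?case using r by simp
next
  case (Suc m)
  then have r: "r < d" by simp
  have "x (Suc r) = 0" using Suc.hyps(1)[of "Suc r"] Suc by auto
  then have "\<delta> r * x r = \<delta> j * x r" using eq[of r] r by simp
  then have "(\<delta> r - \<delta> j) * x r = 0" by (simp add: algebra_simps)
  moreover have "\<delta> r \<noteq> \<delta> j" using inj_neq[OF inj, of r j] Suc r by auto
  ultimately show ?case by simp
qed

lemma rker_prod:
  fixes \<delta> \<sigma> x :: "nat \<Rightarrow> 'a::field"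
  assumes j: "j \<le> d"
    and eq: "\<And>r. r \<le> d \<Longrightarrow> \<delta> r * x r + (if r < d then \<sigma> (Suc r) * x (Suc r) else 0) = \<delta> j * x r"
  shows "r \<le> j \<Longrightarrow> x r * (\<Prod>k\<in>{r..<j}. \<delta> j - \<delta> k) = (\<Prod>k\<in>{Suc r..j}. \<sigma> k) * x j"
proof (induction "j - r" arbitrary: r)
  case 0
  then show ?case by simp
next
  case (Suc m)
  then have r: "r < j" by simp
  have IH: "x (Suc r) * (\<Prod>k\<in>{Suc r..<j}. \<delta> j - \<delta> k) = (\<Prod>k\<in>{Suc (Suc r)..j}. \<sigma> k) * x j"
    using Suc.hyps(1)[of "Suc r"] Suc r by auto
  have e: "(\<delta> j - \<delta> r) * x r = \<sigma> (Suc r) * x (Suc r)"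
    using eq[of r] r j by (simp add: algebra_simps)
  have p1: "(\<Prod>k\<in>{r..<j}. \<delta> j - \<delta> k) = (\<delta> j - \<delta> r) * (\<Prod>k\<in>{Suc r..<j}. \<delta> j - \<delta> k)"
    using r by (simp add: prod.atLeast_Suc_lessThan)
  have p2: "(\<Prod>k\<in>{Suc r..j}. \<sigma> k) = \<sigma> (Suc r) * (\<Prod>k\<in>{Suc (Suc r)..j}. \<sigma> k)"
    using r by (simp add: prod.atLeast_Suc_atMost)
  have "x r * (\<Prod>k\<in>{r..<j}. \<delta> j - \<delta> k) = ((\<delta> j - \<delta> r) * x r) * (\<Prod>k\<in>{Suc r..<j}. \<delta> j - \<delta> k)"
    by (simp only: p1 mult_ac)
  also have "\<dots> = \<sigma> (Suc r) * (x (Suc r) * (\<Prod>k\<in>{Suc r..<j}. \<delta> j - \<delta> k))"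
    by (subst e) (rule mult.assoc)
  also have "\<dots> = (\<Prod>k\<in>{Suc r..j}. \<sigma> k) * x j" by (simp only: IH p2 mult_ac)
  finally show ?case .
qed

lemma lker_zero:
  fixes \<delta> \<sigma> y :: "nat \<Rightarrow> 'a::field"
  assumes inj: "inj_on \<delta> {0..d}" and j: "j \<le> d"
    and eq: "\<And>c. c \<le> d \<Longrightarrow> y c * \<delta> c + (if 0 < c then y (c - 1) * \<sigma> c else 0) = \<delta> j * y c"
  shows "c < j \<Longrightarrow> y c = 0"
proof (induction c)
  case 0
  have "y 0 * \<delta> 0 = \<delta> j * y 0" using eq[of 0] by simp
  then have "(\<delta> 0 - \<delta> j) * y 0 = 0" by (simp add: algebra_simps)
  moreover have "\<delta> 0 \<noteq> \<delta> j" using inj_neq[OF inj, of 0 j] 0 j by auto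
  ultimately show ?case by simp
next
  case (Suc c)
  then have "y c = 0" by simp
  then have "y (Suc c) * \<delta> (Suc c) = \<delta> j * y (Suc c)" using eq[of "Suc c"] Suc j by simp
  then have "(\<delta> (Suc c) - \<delta> j) * y (Suc c) = 0" by (simp add: algebra_simps)
  moreover have "\<delta> (Suc c) \<noteq> \<delta> j" using inj_neq[OF inj, of "Suc c" j] Suc j by auto
  ultimately show ?case by simp
qed

lemma lker_prod:
  fixes \<delta> \<sigma> y :: "nat \<Rightarrow> 'a::field"
  assumes eq: "\<And>c. c \<le> d \<Longrightarrow> y c * \<delta> c + (if 0 < c then y (c - 1) * \<sigma> c else 0) = \<delta> j * y c"
  shows "j \<le> c \<Longrightarrow> c \<le> d \<Longrightarrow> y c * (\<Prod>k\<in>{Suc j..c}. \<delta> j - \<delta> k) = (\<Prod>k\<in>{Suc j..c}. \<sigma> k) * y j"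
proof (induction c)
  case 0
  then show ?case by simp
next
  case (Suc c)
  show ?case
  proof (cases "j = Suc c")
    case True then show ?thesis by simp
  next
    case False
    then have jc: "j \<le> c" using Suc by simp
    have IH: "y c * (\<Prod>k\<in>{Suc j..c}. \<delta> j - \<delta> k) = (\<Prod>k\<in>{Suc j..c}. \<sigma> k) * y j"
      using Suc jc by simp
    have e: "(\<delta> j - \<delta> (Suc c)) * y (Suc c) = \<sigma> (Suc c) * y c"
      using eq[of "Suc c"] Suc by (simp add: algebra_simps)
    have p1: "(\<Prod>k\<in>{Suc j..Suc c}. \<delta> j - \<delta> k) = (\<Prod>k\<in>{Suc j..c}. \<delta> j - \<delta> k) * (\<delta> j - \<delta> (Suc c))"
      using jc by (simp add: prod.cl_ivl_Suc)
    have p2: "(\<Prod>k\<in>{Suc j..Suc c}. \<sigma> k) = (\<Prod>k\<in>{Suc j..c}. \<sigma> k) * \<sigma> (Suc c)"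
      using jc by (simp add: prod.cl_ivl_Suc)
    have "y (Suc c) * (\<Prod>k\<in>{Suc j..Suc c}. \<delta> j - \<delta> k) = ((\<delta> j - \<delta> (Suc c)) * y (Suc c)) * (\<Prod>k\<in>{Suc j..c}. \<delta> j - \<delta> k)"
      by (simp only: p1 mult_ac)
    also have "\<dots> = \<sigma> (Suc c) * (y c * (\<Prod>k\<in>{Suc j..c}. \<delta> j - \<delta> k))" by (subst e) (rule mult.assoc)
    also have "\<dots> = (\<Prod>k\<in>{Suc j..Suc c}. \<sigma> k) * y j" by (simp only: IH p2 mult_ac)
    finally show ?thesis .
  qed
qed

locale ubd =
  fixes d :: nat and \<delta> \<sigma> :: "nat \<Rightarrow> 'a::field" and j :: nat and P :: "'a mat"
  assumes inj: "inj_on \<delta> {0..d}" and snz: "\<And>k. 1 \<le> k \<Longrightarrow> k \<le> d \<Longrightarrow> \<sigma> k \<noteq> 0"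
    and j: "j \<le> d" and P: "P \<in> carrier_mat (Suc d) (Suc d)"
    and MP: "upper_bidiag d \<delta> \<sigma> * P = \<delta> j \<cdot>\<^sub>m P"
    and PM: "P * upper_bidiag d \<delta> \<sigma> = \<delta> j \<cdot>\<^sub>m P"
begin

lemma col_eq: "c \<le> d \<Longrightarrow> r \<le> d \<Longrightarrow>
   \<delta> r * P $$ (r,c) + (if r < d then \<sigma> (Suc r) * P $$ (Suc r,c) else 0) = \<delta> j * P $$ (r,c)"
proof -
  assume c: "c \<le> d" and r: "r \<le> d"
  have "(upper_bidiag d \<delta> \<sigma> * P) $$ (r,c) = (\<delta> j \<cdot>\<^sub>m P) $$ (r,c)" by (simp add: MP)
  then show ?thesis using upper_mult_entry[OF P r, of c \<delta> \<sigma>] P c r by simp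
qed

lemma row_eq: "r \<le> d \<Longrightarrow> c \<le> d \<Longrightarrow>
   P $$ (r,c) * \<delta> c + (if 0 < c then P $$ (r, c - 1) * \<sigma> c else 0) = \<delta> j * P $$ (r,c)"
proof -
  assume r: "r \<le> d" and c: "c \<le> d"
  have "(P * upper_bidiag d \<delta> \<sigma>) $$ (r,c) = (\<delta> j \<cdot>\<^sub>m P) $$ (r,c)" by (simp add: PM)
  then show ?thesis using mult_upper_entry[OF P _ c, of r \<delta> \<sigma>] P c r by simp
qed

lemma U1: assumes "j < r" "r \<le> d" "c \<le> d" shows "P $$ (r,c) = 0"
  by (rule rker_zero[OF inj j, where x="\<lambda>r. P $$ (r,c)" and \<sigma>=\<sigma>]) (use col_eq assms in auto)

lemma U2: assumes "c < j" "r \<le> d" shows "P $$ (r,c) = 0"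
  by (rule lker_zero[OF inj j, where y="\<lambda>c. P $$ (r,c)" and \<sigma>=\<sigma>]) (use row_eq assms in auto)

lemma colprod: assumes "r \<le> j" "c \<le> d" shows
   "P $$ (r,c) * (\<Prod>k\<in>{r..<j}. \<delta> j - \<delta> k) = (\<Prod>k\<in>{Suc r..j}. \<sigma> k) * P $$ (j,c)"
  by (rule rker_prod[OF j, where x="\<lambda>r. P $$ (r,c)" and \<sigma>=\<sigma>]) (use col_eq assms in auto)

lemma rowprod: assumes "j \<le> c" "c \<le> d" "r \<le> d" shows
   "P $$ (r,c) * (\<Prod>k\<in>{Suc j..c}. \<delta> j - \<delta> k) = (\<Prod>k\<in>{Suc j..c}. \<sigma> k) * P $$ (r,j)"
  by (rule lker_prod[where y="\<lambda>c. P $$ (r,c)" and \<sigma>=\<sigma> and d=d]) (use row_eq assms in auto)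

lemma pnz1: "(\<Prod>k\<in>{r..<j}. \<delta> j - \<delta> k) \<noteq> 0"
  using inj_neq[OF inj] j by (auto simp: prod_zero_iff)

lemma pnz2: "c \<le> d \<Longrightarrow> (\<Prod>k\<in>{Suc j..c}. \<delta> j - \<delta> k) \<noteq> 0"
  using inj_neq[OF inj] j by (auto simp: prod_zero_iff)

lemma snz1: "(\<Prod>k\<in>{Suc r..j}. \<sigma> k) \<noteq> 0"
  using snz j by (auto simp: prod_zero_iff)

lemma snz2: "c \<le> d \<Longrightarrow> (\<Prod>k\<in>{Suc j..c}. \<sigma> k) \<noteq> 0"
  using snz j by (auto simp: prod_zero_iff)

lemma U4: "r \<le> d \<Longrightarrow> c \<le> d \<Longrightarrow> P $$ (r,c) * P $$ (j,j) = P $$ (r,j) * P $$ (j,c)"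
proof -
  assume r: "r \<le> d" and c: "c \<le> d"
  show ?thesis
  proof (cases "r \<le> j")
    case True
    let ?D = "\<Prod>k\<in>{r..<j}. \<delta> j - \<delta> k" and ?S = "\<Prod>k\<in>{Suc r..j}. \<sigma> k"
    have a: "P $$ (r,c) * ?D = ?S * P $$ (j,c)" using colprod True c by blast
    have b: "P $$ (r,j) * ?D = ?S * P $$ (j,j)" using colprod True j by blast
    have "?D * (P $$ (r,c) * P $$ (j,j)) = ?D * (P $$ (r,j) * P $$ (j,c))"
    proof -
      have "?D * (P $$ (r,c) * P $$ (j,j)) = (P $$ (r,c) * ?D) * P $$ (j,j)" by (simp add: mult_ac)
      also have "\<dots> = ?S * P $$ (j,c) * P $$ (j,j)" by (simp add: a)
      also have "\<dots> = (P $$ (r,j) * ?D) * P $$ (j,c)" by (simp add: b mult_ac)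
      also have "\<dots> = ?D * (P $$ (r,j) * P $$ (j,c))" by (simp add: mult_ac)
      finally show ?thesis .
    qed
    then show ?thesis using pnz1[of r] by simp
  next
    case False
    then show ?thesis using U1 r c j by auto
  qed
qed

lemma U3:
  assumes idem: "P * P = P" and nz: "P \<noteq> 0\<^sub>m (Suc d) (Suc d)"
  shows "P $$ (j,j) = 1"
proof -
  have "P $$ (j,j) = (P * P) $$ (j,j)" using idem by simp
  also have "\<dots> = (\<Sum>k<Suc d. P $$ (j,k) * P $$ (k,j))" using P j by (intro mult_entry) auto
  also have "\<dots> = (\<Sum>k<Suc d. if k = j then P $$ (j,j) * P $$ (j,j) else 0)"
  proof (intro sum.cong refl)
    fix k assume "k \<in> {..<Suc d}"
    then show "P $$ (j,k) * P $$ (k,j) = (if k = j then P $$ (j,j) * P $$ (j,j) else 0)"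
      using U1[of k j] U2[of k j] j by (cases "k < j"; cases "j < k") auto
  qed
  also have "\<dots> = P $$ (j,j) * P $$ (j,j)" using j by simp
  finally have sq: "P $$ (j,j) = P $$ (j,j) * P $$ (j,j)" .
  have "P $$ (j,j) \<noteq> 0"
  proof
    assume z: "P $$ (j,j) = 0"
    have rowj: "P $$ (j,c) = 0" if c: "c \<le> d" for c
    proof (cases "c < j")
      case True then show ?thesis using U2 j by auto
    next
      case False
      then have "P $$ (j,c) * (\<Prod>k\<in>{Suc j..c}. \<delta> j - \<delta> k) = 0"
        using rowprod[of c j] c j z by simp
      then show ?thesis using pnz2[OF c] by simp
    qed
    have "P = 0\<^sub>m (Suc d) (Suc d)"
    proof (rule eq_matI)
      fix r c assume "r < dim_row (0\<^sub>m (Suc d) (Suc d))" "c < dim_col (0\<^sub>m (Suc d) (Suc d))"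
      then have r: "r \<le> d" and c: "c \<le> d" by auto
      show "P $$ (r,c) = 0\<^sub>m (Suc d) (Suc d) $$ (r,c)"
      proof (cases "r \<le> j")
        case True
        then have "P $$ (r,c) * (\<Prod>k\<in>{r..<j}. \<delta> j - \<delta> k) = 0"
          using colprod[OF True c] rowj[OF c] by simp
        then show ?thesis using pnz1[of r] r c by simp
      next
        case False then show ?thesis using U1 r c by auto
      qed
    qed (use P in auto)
    then show False using nz by simp
  qed
  then show ?thesis using sq by (metis mult_cancel_left1 mult.commute)
qed

lemma U4':
  assumes idem: "P * P = P" and nz: "P \<noteq> 0\<^sub>m (Suc d) (Suc d)" and r: "r \<le> d" and c: "c \<le> d"
  shows "P $$ (r,c) = P $$ (r,j) * P $$ (j,c)"
  using U4[OF r c] U3[OF idem nz] by simp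

lemma U7:
  assumes idem: "P * P = P" and nz: "P \<noteq> 0\<^sub>m (Suc d) (Suc d)" and X: "X \<in> carrier_mat (Suc d) (Suc d)"
  shows "P * X * P = (P * X * P) $$ (j,j) \<cdot>\<^sub>m P"
proof (rule eq_matI)
  have PX: "P * X \<in> carrier_mat (Suc d) (Suc d)" using P X by simp
  have ent: "(P * X * P) $$ (r,c) = P $$ (r,j) * P $$ (j,c) * (\<Sum>b<Suc d. \<Sum>a<Suc d. P $$ (j,a) * X $$ (a,b) * P $$ (b,j))"
    if r: "r \<le> d" and c: "c \<le> d" for r c
  proof -
    have "(P * X * P) $$ (r,c) = (\<Sum>b<Suc d. (P * X) $$ (r,b) * P $$ (b,c))"
      using PX P r c by (intro mult_entry) auto
    also have "\<dots> = (\<Sum>b<Suc d. (\<Sum>a<Suc d. P $$ (r,a) * X $$ (a,b)) * P $$ (b,c))"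
      using P X r by (intro sum.cong refl) (subst mult_entry[of _ "Suc d" "Suc d"], auto)
    also have "\<dots> = (\<Sum>b<Suc d. \<Sum>a<Suc d. P $$ (r,j) * P $$ (j,c) * (P $$ (j,a) * X $$ (a,b) * P $$ (b,j)))"
    proof (intro sum.cong refl)
      fix b assume b: "b \<in> {..<Suc d}"
      have "(\<Sum>a<Suc d. P $$ (r,a) * X $$ (a,b)) * P $$ (b,c) = (\<Sum>a<Suc d. P $$ (r,a) * X $$ (a,b) * P $$ (b,c))"
        by (rule sum_distrib_right)
      also have "\<dots> = (\<Sum>a<Suc d. P $$ (r,j) * P $$ (j,c) * (P $$ (j,a) * X $$ (a,b) * P $$ (b,j)))"
      proof (intro sum.cong refl)
        fix a assume a: "a \<in> {..<Suc d}"
        have "P $$ (r,a) = P $$ (r,j) * P $$ (j,a)" using U4'[OF idem nz r, of a] a by simp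
        moreover have "P $$ (b,c) = P $$ (b,j) * P $$ (j,c)" using U4'[OF idem nz _ c, of b] b by simp
        ultimately show "P $$ (r,a) * X $$ (a,b) * P $$ (b,c) = P $$ (r,j) * P $$ (j,c) * (P $$ (j,a) * X $$ (a,b) * P $$ (b,j))"
          by (simp add: mult_ac)
      qed
      finally show "(\<Sum>a<Suc d. P $$ (r,a) * X $$ (a,b)) * P $$ (b,c) = (\<Sum>a<Suc d. P $$ (r,j) * P $$ (j,c) * (P $$ (j,a) * X $$ (a,b) * P $$ (b,j)))" .
    qed
    also have "\<dots> = P $$ (r,j) * P $$ (j,c) * (\<Sum>b<Suc d. \<Sum>a<Suc d. P $$ (j,a) * X $$ (a,b) * P $$ (b,j))"
      by (simp only: sum_distrib_left)
    finally show ?thesis .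
  qed
  fix r c assume "r < dim_row ((P * X * P) $$ (j,j) \<cdot>\<^sub>m P)" "c < dim_col ((P * X * P) $$ (j,j) \<cdot>\<^sub>m P)"
  then have r: "r \<le> d" and c: "c \<le> d" using P by auto
  have "(P * X * P) $$ (j,j) = (\<Sum>b<Suc d. \<Sum>a<Suc d. P $$ (j,a) * X $$ (a,b) * P $$ (b,j))"
    using ent[OF j j] U3[OF idem nz] by simp
  then show "(P * X * P) $$ (r,c) = ((P * X * P) $$ (j,j) \<cdot>\<^sub>m P) $$ (r,c)"
    using ent[OF r c] U4'[OF idem nz r c] P r c by (simp add: mult_ac)
qed (use P in auto)

end


lemma nil_upper:
  fixes \<delta> \<sigma> :: "nat \<Rightarrow> 'a::field"
  shows "foldr (\<lambda>k N. (upper_bidiag d \<delta> \<sigma> - \<delta> k \<cdot>\<^sub>m 1\<^sub>m (Suc d)) * N) [0..<Suc d] (1\<^sub>m (Suc d)) = 0\<^sub>m (Suc d) (Suc d)"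
proof -
  let ?N = "\<lambda>k. upper_bidiag d \<delta> \<sigma> - \<delta> k \<cdot>\<^sub>m 1\<^sub>m (Suc d)"
  let ?S = "\<lambda>m. foldr (\<lambda>k N. ?N k * N) [m..<Suc d] (1\<^sub>m (Suc d))"
  have Sc: "?S m \<in> carrier_mat (Suc d) (Suc d)" for m by (rule foldr_carrier) auto
  have main: "\<forall>r c. m \<le> r \<longrightarrow> r \<le> d \<longrightarrow> c \<le> d \<longrightarrow> ?S m $$ (r,c) = 0" if "m \<le> Suc d" for m
    using that
  proof (induction "Suc d - m" arbitrary: m)
    case 0 then show ?case by auto
  next
    case (Suc x)
    then have m: "m < Suc d" by simp
    have IH: "\<forall>r c. Suc m \<le> r \<longrightarrow> r \<le> d \<longrightarrow> c \<le> d \<longrightarrow> ?S (Suc m) $$ (r,c) = 0"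
      using Suc by simp
    have Sm: "?S m = ?N m * ?S (Suc m)" by (subst upt_conv_Cons[OF m]) simp
    show ?case
    proof (intro allI impI)
      fix r c assume r1: "m \<le> r" and r: "r \<le> d" and c: "c \<le> d"
      have "?S m $$ (r,c) = (\<Sum>k<Suc d. ?N m $$ (r,k) * ?S (Suc m) $$ (k,c))"
        unfolding Sm by (rule mult_entry[OF _ Sc]) (use r c in auto)
      also have "\<dots> = 0"
      proof (intro sum.neutral ballI)
        fix k assume k: "k \<in> {..<Suc d}"
        show "?N m $$ (r,k) * ?S (Suc m) $$ (k,c) = 0"
        proof (cases "k < r")
          case True
          then have "?N m $$ (r,k) = 0" using r k by (simp add: upper_bidiag_index)
          then show ?thesis by simp
        next
          case False
          show ?thesis
          proof (cases "k = m")
            case True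
            then have "k = r" using False r1 by simp
            then have "?N m $$ (r,k) = 0" using r True by (simp add: upper_bidiag_index)
            then show ?thesis by simp
          next
            case False': False
            then have "?S (Suc m) $$ (k,c) = 0" using IH False r1 k c by auto
            then show ?thesis by simp
          qed
        qed
      qed
      finally show "?S m $$ (r,c) = 0" .
    qed
  qed
  show ?thesis
  proof (rule eq_matI)
    fix r c assume "r < dim_row (0\<^sub>m (Suc d) (Suc d))" "c < dim_col (0\<^sub>m (Suc d) (Suc d))"
    then show "?S 0 $$ (r,c) = 0\<^sub>m (Suc d) (Suc d) $$ (r,c)" using main[of 0] by auto
  qed (use Sc[of 0] in auto)
qed

lemma nil_lower_rev:
  fixes \<delta> :: "nat \<Rightarrow> 'a::field"
  shows "foldr (\<lambda>k N. (lower_bidiag d (\<lambda>r. \<delta> (d - r)) - \<delta> k \<cdot>\<^sub>m 1\<^sub>m (Suc d)) * N) [0..<Suc d] (1\<^sub>m (Suc d)) = 0\<^sub>m (Suc d) (Suc d)"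
proof -
  let ?N = "\<lambda>k. lower_bidiag d (\<lambda>r. \<delta> (d - r)) - \<delta> k \<cdot>\<^sub>m 1\<^sub>m (Suc d)"
  let ?S = "\<lambda>m. foldr (\<lambda>k N. ?N k * N) [m..<Suc d] (1\<^sub>m (Suc d))"
  have Sc: "?S m \<in> carrier_mat (Suc d) (Suc d)" for m by (rule foldr_carrier) auto
  have main: "\<forall>r c. r + m \<le> d \<longrightarrow> c \<le> d \<longrightarrow> ?S m $$ (r,c) = 0" if "m \<le> Suc d" for m
    using that
  proof (induction "Suc d - m" arbitrary: m)
    case 0 then show ?case by auto
  next
    case (Suc x)
    then have m: "m < Suc d" by simp
    have IH: "\<forall>r c. r + Suc m \<le> d \<longrightarrow> c \<le> d \<longrightarrow> ?S (Suc m) $$ (r,c) = 0"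
      using Suc by simp
    have Sm: "?S m = ?N m * ?S (Suc m)" by (subst upt_conv_Cons[OF m]) simp
    show ?case
    proof (intro allI impI)
      fix r c assume r1: "r + m \<le> d" and c: "c \<le> d"
      have r: "r \<le> d" using r1 by simp
      have "?S m $$ (r,c) = (\<Sum>k<Suc d. ?N m $$ (r,k) * ?S (Suc m) $$ (k,c))"
        unfolding Sm by (rule mult_entry[OF _ Sc]) (use r c in auto)
      also have "\<dots> = 0"
      proof (intro sum.neutral ballI)
        fix k assume k: "k \<in> {..<Suc d}"
        show "?N m $$ (r,k) * ?S (Suc m) $$ (k,c) = 0"
        proof (cases "r < k")
          case True
          then have "?N m $$ (r,k) = 0" using r k by (simp add: lower_bidiag_index)
          then show ?thesis by simp
        next
          case False
          show ?thesis
          proof (cases "k = r \<and> r + m = d")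
            case True
            then have "d - r = m" by linarith
            then have "?N m $$ (r,k) = 0" using r True by (simp add: lower_bidiag_index)
            then show ?thesis by simp
          next
            case False': False
            then have "k + Suc m \<le> d" using False r1 by auto
            then have "?S (Suc m) $$ (k,c) = 0" using IH c by auto
            then show ?thesis by simp
          qed
        qed
      qed
      finally show "?S m $$ (r,c) = 0" .
    qed
  qed
  show ?thesis
  proof (rule eq_matI)
    fix r c assume "r < dim_row (0\<^sub>m (Suc d) (Suc d))" "c < dim_col (0\<^sub>m (Suc d) (Suc d))"
    then show "?S 0 $$ (r,c) = 0\<^sub>m (Suc d) (Suc d) $$ (r,c)" using main[of 0] by auto
  qed (use Sc[of 0] in auto)
qed

definition msum :: "nat \<Rightarrow> (nat \<Rightarrow> 'a::field mat) \<Rightarrow> nat list \<Rightarrow> 'a mat" where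
  "msum n h xs = foldr (\<lambda>k M. h k + M) xs (0\<^sub>m n n)"

lemma msum_Nil[simp]: "msum n h [] = 0\<^sub>m n n" unfolding msum_def by simp
lemma msum_Cons[simp]: "msum n h (x # xs) = h x + msum n h xs" unfolding msum_def by simp

lemma msum_carrier: "(\<And>k. k \<in> set xs \<Longrightarrow> h k \<in> carrier_mat n n) \<Longrightarrow> msum n h xs \<in> carrier_mat n n"
  by (induction xs) auto

lemma msum_append:
  assumes "\<And>k. k \<in> set (xs @ ys) \<Longrightarrow> h k \<in> carrier_mat n n"
  shows "msum n h (xs @ ys) = msum n h xs + msum n h ys"
  using assms
proof (induction xs)
  case Nil
  have "msum n h ys \<in> carrier_mat n n" using Nil by (intro msum_carrier) auto
  then show ?case by simp
next
  case (Cons a xs)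
  have c1: "msum n h xs \<in> carrier_mat n n" using Cons.prems by (intro msum_carrier) auto
  have c2: "msum n h ys \<in> carrier_mat n n" using Cons.prems by (intro msum_carrier) auto
  have ha: "h a \<in> carrier_mat n n" using Cons.prems by auto
  show ?case using Cons c1 c2 ha by (simp add: assoc_add_mat[OF ha c1 c2])
qed

lemma mult_msum:
  assumes "\<And>k. k \<in> set xs \<Longrightarrow> h k \<in> carrier_mat n n" "X \<in> carrier_mat n n"
  shows "X * msum n h xs = msum n (\<lambda>k. X * h k) xs"
  using assms
proof (induction xs)
  case Nil then show ?case by simp
next
  case (Cons a xs)
  have c1: "msum n h xs \<in> carrier_mat n n" using Cons.prems by (intro msum_carrier) auto
  have ha: "h a \<in> carrier_mat n n" using Cons.prems by auto
  then show ?case using Cons c1 by (simp add: mult_add_distrib_mat[OF Cons.prems(2) ha c1])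
qed

lemma msum_mult:
  assumes "\<And>k. k \<in> set xs \<Longrightarrow> h k \<in> carrier_mat n n" "X \<in> carrier_mat n n"
  shows "msum n h xs * X = msum n (\<lambda>k. h k * X) xs"
  using assms
proof (induction xs)
  case Nil then show ?case by simp
next
  case (Cons a xs)
  have c1: "msum n h xs \<in> carrier_mat n n" using Cons.prems by (intro msum_carrier) auto
  have ha: "h a \<in> carrier_mat n n" using Cons.prems by auto
  then show ?case using Cons c1 by (simp add: add_mult_distrib_mat[OF ha c1 Cons.prems(2)])
qed

lemma msum_zero: "(\<And>k. k \<in> set xs \<Longrightarrow> h k = 0\<^sub>m n n) \<Longrightarrow> msum n h xs = 0\<^sub>m n n"
  by (induction xs) auto

lemma msum_cong: "(\<And>k. k \<in> set xs \<Longrightarrow> h k = h' k) \<Longrightarrow> msum n h xs = msum n h' xs"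
  by (induction xs) auto

lemma iso_msum:
  fixes f :: "'a::field mat \<Rightarrow> 'a mat"
  assumes f: "alg_iso n f" and h: "\<And>k. k \<in> set xs \<Longrightarrow> h k \<in> carrier_mat n n"
  shows "f (msum n h xs) = msum n (\<lambda>k. f (h k)) xs"
  using h
proof (induction xs)
  case Nil then show ?case using iso_zero[OF f] by simp
next
  case (Cons a xs)
  have c1: "msum n h xs \<in> carrier_mat n n" using Cons.prems by (intro msum_carrier) auto
  then show ?case using Cons f by (simp add: iso_add)
qed

lemma msum_single:
  assumes "\<And>k. k \<in> set (xs @ j # ys) \<Longrightarrow> h k \<in> carrier_mat n n"
    "\<And>k. k \<in> set (xs @ ys) \<Longrightarrow> h k = 0\<^sub>m n n"
  shows "msum n h (xs @ j # ys) = h j"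
proof -
  have "msum n h (xs @ j # ys) = msum n h xs + msum n h (j # ys)"
    using assms by (intro msum_append) auto
  also have "\<dots> = h j"
    using assms by (simp add: msum_zero)
  finally show ?thesis .
qed


declare upt_Suc[simp del]

lemma prod_list_map_one: "(\<And>x. x \<in> set xs \<Longrightarrow> f x = 1) \<Longrightarrow> prod_list (map f xs) = (1::'a::comm_monoid_mult)"
  by (induction xs) auto

lemma prod_list_map_zero: "x \<in> set xs \<Longrightarrow> f x = 0 \<Longrightarrow> prod_list (map f xs) = (0::'a::comm_semiring_1)"
  by (induction xs) auto

lemma self_add_smult_commute:
  fixes X :: "'a::field mat"
  assumes X: "X \<in> carrier_mat n n"
  shows "X * (X + c \<cdot>\<^sub>m 1\<^sub>m n) = (X + c \<cdot>\<^sub>m 1\<^sub>m n) * X"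
proof -
  have "X * (X + c \<cdot>\<^sub>m 1\<^sub>m n) = X * X + X * (c \<cdot>\<^sub>m 1\<^sub>m n)"
    using X by (simp add: mult_add_distrib_mat[of X n n])
  also have "X * (c \<cdot>\<^sub>m 1\<^sub>m n) = c \<cdot>\<^sub>m X" using X by (simp add: mult_smult_distrib[of X n n _ n] right_mult_one_mat)
  also have "c \<cdot>\<^sub>m X = (c \<cdot>\<^sub>m 1\<^sub>m n) * X" using X by (simp add: mult_smult_assoc_mat[of _ n n X n] left_mult_one_mat)
  also have "X * X + (c \<cdot>\<^sub>m 1\<^sub>m n) * X = (X + c \<cdot>\<^sub>m 1\<^sub>m n) * X"
    using X by (simp add: add_mult_distrib_mat[of X n n])
  finally show ?thesis .
qed

lemma affine_commute:
  fixes M :: "'a::field mat"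
  assumes M: "M \<in> carrier_mat n n"
  shows "(M - a \<cdot>\<^sub>m 1\<^sub>m n) * (M - b \<cdot>\<^sub>m 1\<^sub>m n) = (M - b \<cdot>\<^sub>m 1\<^sub>m n) * (M - a \<cdot>\<^sub>m 1\<^sub>m n)"
proof -
  have e: "M - a \<cdot>\<^sub>m 1\<^sub>m n = (M - b \<cdot>\<^sub>m 1\<^sub>m n) + (b - a) \<cdot>\<^sub>m 1\<^sub>m n"
    using M by (intro eq_matI) (auto simp: algebra_simps)
  show ?thesis unfolding e by (rule self_add_smult_commute[symmetric]) (use M in simp)
qed

lemma affine_commute_M:
  fixes M :: "'a::field mat"
  assumes M: "M \<in> carrier_mat n n"
  shows "M * (c \<cdot>\<^sub>m (M - a \<cdot>\<^sub>m 1\<^sub>m n)) = (c \<cdot>\<^sub>m (M - a \<cdot>\<^sub>m 1\<^sub>m n)) * M"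
proof -
  have e: "M = (M - a \<cdot>\<^sub>m 1\<^sub>m n) + a \<cdot>\<^sub>m 1\<^sub>m n"
    using M by (intro eq_matI) (auto simp: algebra_simps)
  have Mc: "M - a \<cdot>\<^sub>m 1\<^sub>m n \<in> carrier_mat n n" using M by simp
  have "M * (M - a \<cdot>\<^sub>m 1\<^sub>m n) = (M - a \<cdot>\<^sub>m 1\<^sub>m n) * M"
    by (subst (1 3) e, rule self_add_smult_commute[symmetric, OF Mc])
  then show ?thesis using M Mc
    by (simp add: mult_smult_distrib[of M n n _ n] mult_smult_assoc_mat[of _ n n M n])
qed

lemma filter_neq_upt:
  assumes "j \<le> d"
  shows "filter (\<lambda>k. k \<noteq> j) [0..<Suc d] = [0..<j] @ [Suc j..<Suc d]"
    and "[0..<Suc d] = [0..<j] @ j # [Suc j..<Suc d]"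
proof -
  show e: "[0..<Suc d] = [0..<j] @ j # [Suc j..<Suc d]"
  proof -
    have "[0..<Suc d] = [0..<j] @ [j..<Suc d]" using upt_add_eq_append[of 0 j "Suc d - j"] assms by simp
    also have "[j..<Suc d] = j # [Suc j..<Suc d]" using assms by (simp add: upt_conv_Cons)
    finally show ?thesis .
  qed
  have "filter (\<lambda>k. k \<noteq> j) [0..<j] = [0..<j]" by (auto intro: filter_True)
  moreover have "filter (\<lambda>k. k \<noteq> j) [Suc j..<Suc d] = [Suc j..<Suc d]" by (auto intro: filter_True)
  ultimately show "filter (\<lambda>k. k \<noteq> j) [0..<Suc d] = [0..<j] @ [Suc j..<Suc d]"
    by (subst e) simp
qed

locale pim =
  fixes d :: nat and M :: "'a::field mat" and \<mu> :: "nat \<Rightarrow> 'a"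
  assumes M: "M \<in> carrier_mat (Suc d) (Suc d)" and inj: "inj_on \<mu> {0..d}"
    and Z: "foldr (\<lambda>k N. (M - \<mu> k \<cdot>\<^sub>m 1\<^sub>m (Suc d)) * N) [0..<Suc d] (1\<^sub>m (Suc d)) = 0\<^sub>m (Suc d) (Suc d)"
begin

abbreviation "E \<equiv> prim_idem d M \<mu>"
abbreviation "g \<equiv> (\<lambda>k. M - \<mu> k \<cdot>\<^sub>m 1\<^sub>m (Suc d))"

lemma E_carrier[simp]: "E j \<in> carrier_mat (Suc d) (Suc d)"
  using M by (rule prim_idem_carrier)

lemma E_commute: "M * E j = E j * M"
  unfolding prim_idem_def
  by (rule foldr_commute) (use M affine_commute_M[OF M] in auto)

lemma E_eigen:
  assumes j: "j \<le> d"
  shows "M * E j = \<mu> j \<cdot>\<^sub>m E j"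
proof -
  let ?ks = "filter (\<lambda>k. k \<noteq> j) [0..<Suc d]"
  let ?G = "foldr (\<lambda>k N. g k * N) [0..<j] (1\<^sub>m (Suc d))"
  let ?H = "foldr (\<lambda>k N. g k * N) [Suc j..<Suc d] (1\<^sub>m (Suc d))"
  have Gc: "?G \<in> carrier_mat (Suc d) (Suc d)" by (rule foldr_carrier) (use M in auto)
  have Hc: "?H \<in> carrier_mat (Suc d) (Suc d)" by (rule foldr_carrier) (use M in auto)
  have gj: "g j \<in> carrier_mat (Suc d) (Suc d)" using M by simp
  have "0\<^sub>m (Suc d) (Suc d) = foldr (\<lambda>k N. g k * N) ([0..<j] @ j # [Suc j..<Suc d]) (1\<^sub>m (Suc d))"
    unfolding filter_neq_upt(2)[OF j, symmetric] by (rule Z[symmetric])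
  also have "\<dots> = ?G * (g j * ?H)"
    by (subst foldr_append_mat) (use M in auto)
  also have "\<dots> = (?G * g j) * ?H" by (rule assoc_mult_mat[symmetric, OF Gc gj Hc])
  also have "?G * g j = g j * ?G"
    by (rule foldr_commute[symmetric]) (use M affine_commute[OF M] in auto)
  also have "(g j * ?G) * ?H = g j * (?G * ?H)" by (rule assoc_mult_mat[OF gj Gc Hc])
  also have "?G * ?H = foldr (\<lambda>k N. g k * N) ?ks (1\<^sub>m (Suc d))"
    unfolding filter_neq_upt(1)[OF j] by (subst foldr_append_mat) (use M in auto)
  finally have z: "g j * foldr (\<lambda>k N. g k * N) ?ks (1\<^sub>m (Suc d)) = 0\<^sub>m (Suc d) (Suc d)" by simp
  have Ee: "E j = prod_list (map (\<lambda>k. 1 / (\<mu> j - \<mu> k)) ?ks) \<cdot>\<^sub>m foldr (\<lambda>k N. g k * N) ?ks (1\<^sub>m (Suc d))"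
    unfolding prim_idem_def by (rule foldr_smult) (use M in auto)
  have Fc: "foldr (\<lambda>k N. g k * N) ?ks (1\<^sub>m (Suc d)) \<in> carrier_mat (Suc d) (Suc d)"
    by (rule foldr_carrier) (use M in auto)
  have "g j * E j = 0\<^sub>m (Suc d) (Suc d)"
    unfolding Ee using z Fc gj by (simp add: mult_smult_distrib[of _ "Suc d" "Suc d" _ "Suc d"])
  moreover have "g j * E j = M * E j - \<mu> j \<cdot>\<^sub>m E j"
    using M by (simp add: minus_mult_distrib_mat[of M "Suc d" "Suc d" _ _ "Suc d"]
        mult_smult_assoc_mat[of _ "Suc d" "Suc d" _ "Suc d"] left_mult_one_mat[OF E_carrier])
  ultimately have "M * E j - \<mu> j \<cdot>\<^sub>m E j = 0\<^sub>m (Suc d) (Suc d)" by simp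
  then show ?thesis
    by (intro eq_matI) (use M in \<open>auto simp: mat_eq_iff\<close>)
qed

lemma E_eigen': "j \<le> d \<Longrightarrow> E j * M = \<mu> j \<cdot>\<^sub>m E j"
  using E_eigen E_commute by simp

lemma E_mult:
  assumes j: "j \<le> d" and k: "k \<le> d"
  shows "E k * E j = (if k = j then E j else 0\<^sub>m (Suc d) (Suc d))"
proof -
  let ?ks = "filter (\<lambda>l. l \<noteq> k) [0..<Suc d]"
  have "E k * E j = foldr (\<lambda>l N. ((1 / (\<mu> k - \<mu> l)) \<cdot>\<^sub>m (M - \<mu> l \<cdot>\<^sub>m 1\<^sub>m (Suc d))) * N) ?ks (E j)"
    unfolding prim_idem_def[of d M \<mu> k]
    by (rule foldr_mult[symmetric, where m="Suc d"]) (use M in auto)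
  also have "\<dots> = prod_list (map (\<lambda>l. 1 / (\<mu> k - \<mu> l) * (\<mu> j - \<mu> l)) ?ks) \<cdot>\<^sub>m E j"
    by (rule foldr_eigen[OF M E_carrier E_eigen[OF j]])
  finally have e: "E k * E j = prod_list (map (\<lambda>l. 1 / (\<mu> k - \<mu> l) * (\<mu> j - \<mu> l)) ?ks) \<cdot>\<^sub>m E j" .
  show ?thesis
  proof (cases "k = j")
    case True
    have "prod_list (map (\<lambda>l. 1 / (\<mu> k - \<mu> l) * (\<mu> j - \<mu> l)) ?ks) = 1"
    proof (rule prod_list_map_one)
      fix l assume "l \<in> set ?ks"
      then have "l \<le> d" "l \<noteq> k" by auto
      then have "\<mu> k \<noteq> \<mu> l" using inj_neq[OF inj, of k l] k by auto
      then show "1 / (\<mu> k - \<mu> l) * (\<mu> j - \<mu> l) = 1" using True by simp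
    qed
    then show ?thesis using e True by (simp add: one_smult_mat')
  next
    case False
    have z: "prod_list (map (\<lambda>l. 1 / (\<mu> k - \<mu> l) * (\<mu> j - \<mu> l)) ?ks) = 0"
      by (rule prod_list_map_zero[of j]) (use False j in auto)
    have "E k * E j = 0 \<cdot>\<^sub>m E j" by (simp only: e z)
    also have "\<dots> = 0\<^sub>m (Suc d) (Suc d)" using carrier_matD[OF E_carrier[of j]] by (intro eq_matI) auto
    finally show ?thesis using False by simp
  qed
qed

lemma E_idem: "j \<le> d \<Longrightarrow> E j * E j = E j"
  using E_mult by simp

end


declare upt_Suc[simp del]

lemma transpose_smult: "transpose_mat (c \<cdot>\<^sub>m X) = c \<cdot>\<^sub>m transpose_mat X"
  by (rule eq_matI) auto

lemma ubd_transpose: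
  fixes \<delta> :: "nat \<Rightarrow> 'a::field"
  assumes inj: "inj_on \<delta> {0..d}" and j: "j \<le> d" and Q: "Q \<in> carrier_mat (Suc d) (Suc d)"
    and LQ: "lower_bidiag d \<delta> * Q = \<delta> j \<cdot>\<^sub>m Q" and QL: "Q * lower_bidiag d \<delta> = \<delta> j \<cdot>\<^sub>m Q"
  shows "ubd d \<delta> (\<lambda>_. 1) j (transpose_mat Q)"
proof
  have "upper_bidiag d \<delta> (\<lambda>_. 1) * transpose_mat Q = transpose_mat (lower_bidiag d \<delta>) * transpose_mat Q"
    by (simp add: transpose_lower_bidiag)
  also have "\<dots> = transpose_mat (Q * lower_bidiag d \<delta>)"
    by (rule transpose_mult[symmetric]) (use Q in auto)
  also have "\<dots> = \<delta> j \<cdot>\<^sub>m transpose_mat Q" using QL by (simp add: transpose_smult)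
  finally show "upper_bidiag d \<delta> (\<lambda>_. 1) * transpose_mat Q = \<delta> j \<cdot>\<^sub>m transpose_mat Q" .
  have "transpose_mat Q * upper_bidiag d \<delta> (\<lambda>_. 1) = transpose_mat Q * transpose_mat (lower_bidiag d \<delta>)"
    by (simp add: transpose_lower_bidiag)
  also have "\<dots> = transpose_mat (lower_bidiag d \<delta> * Q)"
    by (rule transpose_mult[symmetric]) (use Q in auto)
  also have "\<dots> = \<delta> j \<cdot>\<^sub>m transpose_mat Q" using LQ by (simp add: transpose_smult)
  finally show "transpose_mat Q * upper_bidiag d \<delta> (\<lambda>_. 1) = \<delta> j \<cdot>\<^sub>m transpose_mat Q" .
qed (use inj j Q in auto)

lemma rank_transfer:
  fixes f :: "'a::field mat \<Rightarrow> 'a mat"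
  assumes f: "alg_iso n f" and E: "E \<in> carrier_mat n n"
    and r: "\<And>Y. Y \<in> carrier_mat n n \<Longrightarrow> \<exists>c. f E * Y * f E = c \<cdot>\<^sub>m f E"
    and X: "X \<in> carrier_mat n n"
  shows "\<exists>c. E * X * E = c \<cdot>\<^sub>m E"
proof -
  obtain c where c: "f E * f X * f E = c \<cdot>\<^sub>m f E" using r[OF iso_carrier[OF f X]] by blast
  have "f (E * X * E) = f (E * X) * f E" by (rule iso_mult[OF f]) (use E X in auto)
  also have "f (E * X) = f E * f X" by (rule iso_mult[OF f E X])
  also note c
  also have "c \<cdot>\<^sub>m f E = f (c \<cdot>\<^sub>m E)" by (rule iso_smult[OF f E, symmetric])
  finally have "f (E * X * E) = f (c \<cdot>\<^sub>m E)" .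
  then have "E * X * E = c \<cdot>\<^sub>m E" using iso_inj[OF f] E X by simp
  then show ?thesis by blast
qed

lemma mat_nonzero_entry:
  assumes "E \<in> carrier_mat n n" "E \<noteq> 0\<^sub>m n n"
  obtains a b where "a < n" "b < n" "E $$ (a,b) \<noteq> 0"
proof -
  have "\<exists>a b. a < n \<and> b < n \<and> E $$ (a,b) \<noteq> 0"
  proof (rule ccontr)
    assume "\<not> ?thesis"
    then have "E = 0\<^sub>m n n" using assms(1) by (intro eq_matI) auto
    then show False using assms(2) by simp
  qed
  then show ?thesis using that by blast
qed

lemma rank_trace:
  fixes E :: "'a::field mat"
  assumes E: "E \<in> carrier_mat n n" and idem: "E * E = E" and nz: "E \<noteq> 0\<^sub>m n n"
    and r: "\<And>Y. Y \<in> carrier_mat n n \<Longrightarrow> \<exists>c. E * Y * E = c \<cdot>\<^sub>m E"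
    and X: "X \<in> carrier_mat n n"
  shows "E * X * E = mat_tr (X * E) \<cdot>\<^sub>m E"
proof -
  obtain a b where a: "a < n" and b: "b < n" and ab: "E $$ (a,b) \<noteq> 0"
    using mat_nonzero_entry[OF E nz] by blast
  define U :: "'a mat" where "U = mat n n (\<lambda>(r,s). if r = b \<and> s = a then 1 else 0)"
  have Uc: "U \<in> carrier_mat n n" unfolding U_def by simp
  have EU: "(E * U) $$ (r,t) = (if t = a then E $$ (r,b) else 0)" if "r < n" "t < n" for r t
  proof -
    have "(E * U) $$ (r,t) = (\<Sum>k<n. E $$ (r,k) * U $$ (k,t))" using E Uc that by (intro mult_entry) auto
    also have "\<dots> = (\<Sum>k<n. if k = b then (if t = a then E $$ (r,b) else 0) else 0)"
      using that by (intro sum.cong) (auto simp: U_def)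
    also have "\<dots> = (if t = a then E $$ (r,b) else 0)" using b by simp
    finally show ?thesis .
  qed
  have EUE: "(E * U * E) $$ (r,s) = E $$ (r,b) * E $$ (a,s)" if "r < n" "s < n" for r s
  proof -
    have "(E * U * E) $$ (r,s) = (\<Sum>t<n. (E * U) $$ (r,t) * E $$ (t,s))"
      using E Uc that by (intro mult_entry[of _ n n]) auto
    also have "\<dots> = (\<Sum>t<n. if t = a then E $$ (r,b) * E $$ (a,s) else 0)"
      using that by (intro sum.cong) (auto simp: EU)
    also have "\<dots> = E $$ (r,b) * E $$ (a,s)" using a by simp
    finally show ?thesis .
  qed
  obtain c where c: "E * U * E = c \<cdot>\<^sub>m E" using r[OF Uc] by blast
  have "E $$ (a,b) * E $$ (a,b) = c * E $$ (a,b)"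
    using EUE[OF a b] c E a b by (metis index_smult_mat(1) carrier_matD)
  then have cab: "c = E $$ (a,b)" using ab by simp
  have tr1: "mat_tr E = 1"
  proof -
    have "c * mat_tr E = (\<Sum>r<n. c * E $$ (r,r))"
      unfolding mat_tr_def using E by (simp add: sum_distrib_left)
    also have "\<dots> = (\<Sum>r<n. E $$ (a,r) * E $$ (r,b))"
    proof (intro sum.cong refl)
      fix r assume "r \<in> {..<n}"
      then have rn: "r < n" by simp
      have "(E * U * E) $$ (r,r) = c * E $$ (r,r)" using c E rn by simp
      then show "c * E $$ (r,r) = E $$ (a,r) * E $$ (r,b)" using EUE[OF rn rn] by (simp add: mult.commute)
    qed
    also have "\<dots> = (E * E) $$ (a,b)" using E a b by (simp add: mult_entry[OF E E a b])
    also have "\<dots> = c" using idem cab by simp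
    finally have "c * mat_tr E = c * 1" by simp
    then show ?thesis using ab cab by simp
  qed
  obtain c' where c': "E * X * E = c' \<cdot>\<^sub>m E" using r[OF X] by blast
  have "mat_tr (E * X * E) = c'" using c' tr1 mat_tr_smult[OF E] by simp
  moreover have "mat_tr (E * X * E) = mat_tr (X * E)"
  proof -
    have "mat_tr ((E * X) * E) = mat_tr (E * (E * X))" using E X by (intro mat_tr_comm) auto
    also have "E * (E * X) = (E * E) * X" using E X by simp
    also have "\<dots> = E * X" using idem by simp
    also have "mat_tr (E * X) = mat_tr (X * E)" using E X by (intro mat_tr_comm) auto
    finally show ?thesis .
  qed
  ultimately show ?thesis using c' by simp
qed


declare upt_Suc[simp del]

locale LSx =
  fixes d :: nat and A As :: "'a::field mat" and \<theta> \<theta>s \<phi> \<phi>' :: "nat \<Rightarrow> 'a" and i :: nat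
    and f g :: "'a mat \<Rightarrow> 'a mat"
  assumes LS: "leonard_system d A As \<theta> \<theta>s"
    and phi: "\<And>k. 1 \<le> k \<Longrightarrow> k \<le> d \<Longrightarrow> \<phi> k \<noteq> 0"
    and phi': "\<And>k. 1 \<le> k \<Longrightarrow> k \<le> d \<Longrightarrow> \<phi>' k \<noteq> 0"
    and f: "alg_iso (Suc d) f" and fA: "f A = lower_bidiag d \<theta>" and fAs: "f As = upper_bidiag d \<theta>s \<phi>"
    and g: "alg_iso (Suc d) g" and gA: "g A = lower_bidiag d (\<lambda>i. \<theta> (d - i))"
    and gAs: "g As = upper_bidiag d \<theta>s \<phi>'"
    and i1: "1 \<le> i" and i2: "i \<le> d"
begin

abbreviation "Es \<equiv> prim_idem d As \<theta>s"
abbreviation "EF \<equiv> prim_idem d A \<theta> 0"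
abbreviation "EA \<equiv> prim_idem d A \<theta>"

lemma A_car[simp]: "A \<in> carrier_mat (Suc d) (Suc d)"
  using LS unfolding leonard_system_def eigen_ordering_def by auto
lemma As_car[simp]: "As \<in> carrier_mat (Suc d) (Suc d)"
  using LS unfolding leonard_system_def eigen_ordering_def by auto
lemma inj_th: "inj_on \<theta> {0..d}"
  using LS unfolding leonard_system_def eigen_ordering_def by auto
lemma inj_ths: "inj_on \<theta>s {0..d}"
  using LS unfolding leonard_system_def eigen_ordering_def by auto

lemma tri: "j \<le> d \<Longrightarrow> l \<le> d \<Longrightarrow> 1 < \<bar>int j - int l\<bar> \<Longrightarrow> Es j * A * Es l = 0\<^sub>m (Suc d) (Suc d)"
  using LS unfolding leonard_system_def by blast
lemma adj: "j \<le> d \<Longrightarrow> l \<le> d \<Longrightarrow> \<bar>int j - int l\<bar> = 1 \<Longrightarrow> Es j * A * Es l \<noteq> 0\<^sub>m (Suc d) (Suc d)"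
  using LS unfolding leonard_system_def by blast
lemma adjF: "EA 0 * As * EA 1 \<noteq> 0\<^sub>m (Suc d) (Suc d)"
proof -
  have "1 \<le> d" using i1 i2 by simp
  then show ?thesis using LS unfolding leonard_system_def by fastforce
qed

lemma d1: "1 \<le> d" using i1 i2 by simp

lemma iso_shift:
  assumes h: "alg_iso (Suc d) h" and M: "M \<in> carrier_mat (Suc d) (Suc d)"
  shows "h (M - c \<cdot>\<^sub>m 1\<^sub>m (Suc d)) = h M - c \<cdot>\<^sub>m 1\<^sub>m (Suc d)"
  using h M by (simp add: iso_minus iso_smult iso_one)

lemma ZAs: "foldr (\<lambda>k N. (As - \<theta>s k \<cdot>\<^sub>m 1\<^sub>m (Suc d)) * N) [0..<Suc d] (1\<^sub>m (Suc d)) = 0\<^sub>m (Suc d) (Suc d)"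
proof -
  let ?X = "foldr (\<lambda>k N. (As - \<theta>s k \<cdot>\<^sub>m 1\<^sub>m (Suc d)) * N) [0..<Suc d] (1\<^sub>m (Suc d))"
  have Xc: "?X \<in> carrier_mat (Suc d) (Suc d)" by (rule foldr_carrier) auto
  have "f ?X = foldr (\<lambda>k N. f (As - \<theta>s k \<cdot>\<^sub>m 1\<^sub>m (Suc d)) * N) [0..<Suc d] (1\<^sub>m (Suc d))"
    by (rule iso_foldr[OF f]) auto
  also have "\<dots> = foldr (\<lambda>k N. (upper_bidiag d \<theta>s \<phi> - \<theta>s k \<cdot>\<^sub>m 1\<^sub>m (Suc d)) * N) [0..<Suc d] (1\<^sub>m (Suc d))"
    by (simp add: iso_shift[OF f] fAs)
  also have "\<dots> = 0\<^sub>m (Suc d) (Suc d)" by (rule nil_upper)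
  also have "\<dots> = f (0\<^sub>m (Suc d) (Suc d))" using iso_zero[OF f] by simp
  finally show ?thesis using iso_inj[OF f Xc] by simp
qed

lemma ZA: "foldr (\<lambda>k N. (A - \<theta> k \<cdot>\<^sub>m 1\<^sub>m (Suc d)) * N) [0..<Suc d] (1\<^sub>m (Suc d)) = 0\<^sub>m (Suc d) (Suc d)"
proof -
  let ?X = "foldr (\<lambda>k N. (A - \<theta> k \<cdot>\<^sub>m 1\<^sub>m (Suc d)) * N) [0..<Suc d] (1\<^sub>m (Suc d))"
  have Xc: "?X \<in> carrier_mat (Suc d) (Suc d)" by (rule foldr_carrier) auto
  have "g ?X = foldr (\<lambda>k N. g (A - \<theta> k \<cdot>\<^sub>m 1\<^sub>m (Suc d)) * N) [0..<Suc d] (1\<^sub>m (Suc d))"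
    by (rule iso_foldr[OF g]) auto
  also have "\<dots> = foldr (\<lambda>k N. (lower_bidiag d (\<lambda>r. \<theta> (d - r)) - \<theta> k \<cdot>\<^sub>m 1\<^sub>m (Suc d)) * N) [0..<Suc d] (1\<^sub>m (Suc d))"
    by (simp add: iso_shift[OF g] gA)
  also have "\<dots> = 0\<^sub>m (Suc d) (Suc d)" by (rule nil_lower_rev)
  also have "\<dots> = g (0\<^sub>m (Suc d) (Suc d))" using iso_zero[OF g] by simp
  finally show ?thesis using iso_inj[OF g Xc] by simp
qed

sublocale pS: pim d As \<theta>s by unfold_locales (use inj_ths ZAs in auto)
sublocale pA: pim d A \<theta> by unfold_locales (use inj_th ZA in auto)

lemma Es_car[simp]: "Es j \<in> carrier_mat (Suc d) (Suc d)" by (rule prim_idem_carrier) simp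
lemma EA_car[simp]: "EA j \<in> carrier_mat (Suc d) (Suc d)" by (rule prim_idem_carrier) simp

lemma dims[simp]: "dim_row A = Suc d" "dim_col A = Suc d" "dim_row As = Suc d" "dim_col As = Suc d"
  "dim_row (Es j) = Suc d" "dim_col (Es j) = Suc d" "dim_row (EA j) = Suc d" "dim_col (EA j) = Suc d"
  using carrier_matD[OF A_car] carrier_matD[OF As_car] carrier_matD[OF Es_car] carrier_matD[OF EA_car] by auto

lemma Es_nz: assumes j: "j \<le> d" shows "Es j \<noteq> 0\<^sub>m (Suc d) (Suc d)"
proof
  assume z: "Es j = 0\<^sub>m (Suc d) (Suc d)"
  show False
  proof (cases "j < d")
    case True
    have "Es j * A * Es (Suc j) \<noteq> 0\<^sub>m (Suc d) (Suc d)" using adj[of j "Suc j"] True by simp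
    moreover have "Es j * A * Es (Suc j) = 0\<^sub>m (Suc d) (Suc d)" using z by simp
    ultimately show False by simp
  next
    case False
    then have jd: "j = d" using j by simp
    have "Es j * A * Es (d - 1) \<noteq> 0\<^sub>m (Suc d) (Suc d)" using adj[of j "d - 1"] jd d1 by simp
    moreover have "Es j * A * Es (d - 1) = 0\<^sub>m (Suc d) (Suc d)" using z by simp
    ultimately show False by simp
  qed
qed

lemma EF_nz: "EF \<noteq> 0\<^sub>m (Suc d) (Suc d)"
proof
  assume z: "EF = 0\<^sub>m (Suc d) (Suc d)"
  have "EF * As * EA 1 = 0\<^sub>m (Suc d) (Suc d)" using z by simp
  then show False using adjF by simp
qed

lemma iso_eig:
  assumes h: "alg_iso (Suc d) h" and M: "M \<in> carrier_mat (Suc d) (Suc d)" and E: "E \<in> carrier_mat (Suc d) (Suc d)"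
    and ME: "M * E = c \<cdot>\<^sub>m E"
  shows "h M * h E = c \<cdot>\<^sub>m h E"
  using ME iso_mult[OF h M E] iso_smult[OF h E] by metis

lemma iso_eig':
  assumes h: "alg_iso (Suc d) h" and M: "M \<in> carrier_mat (Suc d) (Suc d)" and E: "E \<in> carrier_mat (Suc d) (Suc d)"
    and ME: "E * M = c \<cdot>\<^sub>m E"
  shows "h E * h M = c \<cdot>\<^sub>m h E"
  using ME iso_mult[OF h E M] iso_smult[OF h E] by metis

lemma ubd_f: "j \<le> d \<Longrightarrow> ubd d \<theta>s \<phi> j (f (Es j))"
  by unfold_locales (use inj_ths phi iso_carrier[OF f] iso_eig[OF f As_car Es_car pS.E_eigen]
      iso_eig'[OF f As_car Es_car pS.E_eigen'] fAs in auto)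

lemma ubd_g: "j \<le> d \<Longrightarrow> ubd d \<theta>s \<phi>' j (g (Es j))"
  by unfold_locales (use inj_ths phi' iso_carrier[OF g] iso_eig[OF g As_car Es_car pS.E_eigen]
      iso_eig'[OF g As_car Es_car pS.E_eigen'] gAs in auto)

lemma fF_car[simp]: "f EF \<in> carrier_mat (Suc d) (Suc d)" using iso_carrier[OF f] by simp
lemma gF_car[simp]: "g EF \<in> carrier_mat (Suc d) (Suc d)" using iso_carrier[OF g] by simp
lemma fEs_car[simp]: "f (Es j) \<in> carrier_mat (Suc d) (Suc d)" using iso_carrier[OF f] by simp
lemma gEs_car[simp]: "g (Es j) \<in> carrier_mat (Suc d) (Suc d)" using iso_carrier[OF g] by simp

lemma ubd_fF: "ubd d \<theta> (\<lambda>_. 1) 0 (transpose_mat (f EF))"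
proof (rule ubd_transpose[OF inj_th])
  show "lower_bidiag d \<theta> * f EF = \<theta> 0 \<cdot>\<^sub>m f EF"
    using iso_eig[OF f A_car EA_car pA.E_eigen[of 0]] fA by simp
  show "f EF * lower_bidiag d \<theta> = \<theta> 0 \<cdot>\<^sub>m f EF"
    using iso_eig'[OF f A_car EA_car pA.E_eigen'[of 0]] fA by simp
qed auto

lemma inj_rev: "inj_on (\<lambda>r. \<theta> (d - r)) {0..d}"
proof (rule inj_onI)
  fix x y assume "x \<in> {0..d}" "y \<in> {0..d}" "\<theta> (d - x) = \<theta> (d - y)"
  then have "d - x = d - y" using inj_th unfolding inj_on_def by auto
  then show "x = y" using \<open>x \<in> {0..d}\<close> \<open>y \<in> {0..d}\<close> by auto
qed

lemma ubd_gF: "ubd d (\<lambda>r. \<theta> (d - r)) (\<lambda>_. 1) d (transpose_mat (g EF))"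
proof (rule ubd_transpose[OF inj_rev])
  show "lower_bidiag d (\<lambda>r. \<theta> (d - r)) * g EF = (\<lambda>r. \<theta> (d - r)) d \<cdot>\<^sub>m g EF"
    using iso_eig[OF g A_car EA_car pA.E_eigen[of 0]] gA by simp
  show "g EF * lower_bidiag d (\<lambda>r. \<theta> (d - r)) = (\<lambda>r. \<theta> (d - r)) d \<cdot>\<^sub>m g EF"
    using iso_eig'[OF g A_car EA_car pA.E_eigen'[of 0]] gA by simp
qed auto

lemma fEs_idem: "j \<le> d \<Longrightarrow> f (Es j) * f (Es j) = f (Es j)"
  using pS.E_idem iso_mult[OF f Es_car Es_car] by metis
lemma gEs_idem: "j \<le> d \<Longrightarrow> g (Es j) * g (Es j) = g (Es j)"
  using pS.E_idem iso_mult[OF g Es_car Es_car] by metis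
lemma fEs_nz: "j \<le> d \<Longrightarrow> f (Es j) \<noteq> 0\<^sub>m (Suc d) (Suc d)"
  using iso_nonzero[OF f Es_car Es_nz] by simp
lemma gEs_nz: "j \<le> d \<Longrightarrow> g (Es j) \<noteq> 0\<^sub>m (Suc d) (Suc d)"
  using iso_nonzero[OF g Es_car Es_nz] by simp

lemma transpose_nz: fixes X :: "'b::field mat" shows "X \<in> carrier_mat n n \<Longrightarrow> X \<noteq> 0\<^sub>m n n \<Longrightarrow> transpose_mat X \<noteq> 0\<^sub>m n n"
proof
  assume "X \<in> carrier_mat n n" "X \<noteq> 0\<^sub>m n n" "transpose_mat X = 0\<^sub>m n n"
  then have "transpose_mat (transpose_mat X) = transpose_mat (0\<^sub>m n n)" by simp
  then show False using \<open>X \<noteq> 0\<^sub>m n n\<close> by simp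
qed

lemma transpose_idem: fixes X :: "'b::field mat" shows "X \<in> carrier_mat n n \<Longrightarrow> X * X = X \<Longrightarrow> transpose_mat X * transpose_mat X = transpose_mat X"
  using transpose_mult[of X n n X n] by simp

lemma fF_idem: "f EF * f EF = f EF"
  using pA.E_idem[of 0] iso_mult[OF f EA_car EA_car, of 0 0] by simp
lemma gF_idem: "g EF * g EF = g EF"
  using pA.E_idem[of 0] iso_mult[OF g EA_car EA_car, of 0 0] by simp
lemma fF_nz: "f EF \<noteq> 0\<^sub>m (Suc d) (Suc d)" using iso_nonzero[OF f EA_car EF_nz] .
lemma gF_nz: "g EF \<noteq> 0\<^sub>m (Suc d) (Suc d)" using iso_nonzero[OF g EA_car EF_nz] .

lemma rank_Es:
  assumes j: "j \<le> d" and X: "X \<in> carrier_mat (Suc d) (Suc d)"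
  shows "Es j * X * Es j = mat_tr (X * Es j) \<cdot>\<^sub>m Es j"
proof (rule rank_trace[OF Es_car pS.E_idem[OF j] Es_nz[OF j] _ X])
  fix Y :: "'a mat" assume Y: "Y \<in> carrier_mat (Suc d) (Suc d)"
  interpret u: ubd d \<theta>s \<phi> j "f (Es j)" using ubd_f[OF j] .
  show "\<exists>c. Es j * Y * Es j = c \<cdot>\<^sub>m Es j"
    by (rule rank_transfer[OF f Es_car _ Y]) (use u.U7[OF fEs_idem[OF j] fEs_nz[OF j]] in blast)
qed

lemma rank_F:
  assumes X: "X \<in> carrier_mat (Suc d) (Suc d)"
  shows "EF * X * EF = mat_tr (X * EF) \<cdot>\<^sub>m EF"
proof (rule rank_trace[OF EA_car pA.E_idem[of 0] EF_nz _ X])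
  fix Y :: "'a mat" assume Y: "Y \<in> carrier_mat (Suc d) (Suc d)"
  interpret u: ubd d \<theta> "\<lambda>_. 1" 0 "transpose_mat (f EF)" using ubd_fF .
  have r: "\<exists>c. f EF * Z * f EF = c \<cdot>\<^sub>m f EF" if Z: "Z \<in> carrier_mat (Suc d) (Suc d)" for Z
  proof -
    let ?T = "transpose_mat (f EF)"
    have "?T * transpose_mat Z * ?T = (?T * transpose_mat Z * ?T) $$ (0,0) \<cdot>\<^sub>m ?T"
      by (rule u.U7) (use transpose_idem[OF fF_car fF_idem] transpose_nz[OF fF_car fF_nz] Z in auto)
    then have "transpose_mat (?T * transpose_mat Z * ?T) = transpose_mat ((?T * transpose_mat Z * ?T) $$ (0,0) \<cdot>\<^sub>m ?T)"
      by simp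
    moreover have "transpose_mat (?T * transpose_mat Z * ?T) = f EF * Z * f EF"
    proof -
      have "transpose_mat ((?T * transpose_mat Z) * ?T) = transpose_mat ?T * transpose_mat (?T * transpose_mat Z)"
        by (rule transpose_mult[of _ "Suc d" "Suc d" _ "Suc d"]) (use Z in \<open>auto intro!: mult_carrier_mat[of _ "Suc d" "Suc d"]\<close>)
      also have "transpose_mat (?T * transpose_mat Z) = transpose_mat (transpose_mat Z) * transpose_mat ?T"
        by (rule transpose_mult[of _ "Suc d" "Suc d" _ "Suc d"]) (use Z in auto)
      finally show ?thesis using Z assoc_mult_mat[OF fF_car Z fF_car] by simp
    qed
    ultimately have "f EF * Z * f EF = (?T * transpose_mat Z * ?T) $$ (0,0) \<cdot>\<^sub>m f EF"
      by (simp add: transpose_smult)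
    then show ?thesis by blast
  qed
  show "\<exists>c. EF * Y * EF = c \<cdot>\<^sub>m EF"
    by (rule rank_transfer[OF f EA_car _ Y]) (use r in blast)
qed simp

end


declare upt_Suc[simp del]

context LSx
begin

lemma Es_sum: "msum (Suc d) Es [0..<Suc d] = 1\<^sub>m (Suc d)"
proof -
  let ?S = "msum (Suc d) Es [0..<Suc d]"
  have Sc: "?S \<in> carrier_mat (Suc d) (Suc d)" by (rule msum_carrier) simp
  let ?Y = "1\<^sub>m (Suc d) - ?S"
  have Yc: "?Y \<in> carrier_mat (Suc d) (Suc d)" using Sc by simp
  have EY: "Es k * ?Y = 0\<^sub>m (Suc d) (Suc d)" if k: "k \<le> d" for k
  proof -
    have "Es k * ?S = msum (Suc d) (\<lambda>j. Es k * Es j) [0..<Suc d]" by (rule mult_msum) auto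
    also have "\<dots> = msum (Suc d) (\<lambda>j. Es k * Es j) ([0..<k] @ k # [Suc k..<Suc d])"
      by (subst filter_neq_upt(2)[OF k]) (rule refl)
    also have "\<dots> = Es k * Es k"
      by (rule msum_single) (use pS.E_mult k in auto)
    also have "\<dots> = Es k" by (rule pS.E_idem[OF k])
    finally have e: "Es k * ?S = Es k" .
    have "Es k * ?Y = Es k * 1\<^sub>m (Suc d) - Es k * ?S"
      by (rule mult_minus_distrib_mat) (use Sc in auto)
    also have "\<dots> = Es k - Es k" using e by simp
    also have "\<dots> = 0\<^sub>m (Suc d) (Suc d)" by (intro eq_matI) auto
    finally show ?thesis .
  qed
  have fYc: "f ?Y \<in> carrier_mat (Suc d) (Suc d)" using iso_carrier[OF f Yc] .
  have fEY: "f (Es k) * f ?Y = 0\<^sub>m (Suc d) (Suc d)" if "k \<le> d" for k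
    using EY[OF that] iso_mult[OF f Es_car[of k] Yc] iso_zero[OF f] by simp
  have z: "f ?Y $$ (k,c) = 0" if "k \<le> d" "c \<le> d" for k c
    using that
  proof (induction "d - k" arbitrary: k rule: less_induct)
    case less
    interpret u: ubd d \<theta>s \<phi> k "f (Es k)" using ubd_f[OF less.prems(1)] .
    have "0 = (f (Es k) * f ?Y) $$ (k,c)" using fEY[OF less.prems(1)] less.prems by simp
    also have "\<dots> = (\<Sum>r<Suc d. f (Es k) $$ (k,r) * f ?Y $$ (r,c))"
      by (rule mult_entry[OF fEs_car fYc]) (use less.prems in auto)
    also have "\<dots> = (\<Sum>r<Suc d. if r = k then f ?Y $$ (k,c) else 0)"
    proof (intro sum.cong refl)
      fix r assume r: "r \<in> {..<Suc d}"
      consider "r < k" | "r = k" | "k < r" by linarith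
      then show "f (Es k) $$ (k,r) * f ?Y $$ (r,c) = (if r = k then f ?Y $$ (k,c) else 0)"
      proof cases
        case 1 then show ?thesis using u.U2[of r k] less.prems by simp
      next
        case 2 then show ?thesis using u.U3[OF fEs_idem fEs_nz] less.prems by simp
      next
        case 3
        then have "f ?Y $$ (r,c) = 0" using less.hyps[of r] r less.prems by auto
        then show ?thesis using 3 by simp
      qed
    qed
    also have "\<dots> = f ?Y $$ (k,c)" using less.prems by simp
    finally show ?case by simp
  qed
  have "f ?Y = 0\<^sub>m (Suc d) (Suc d)" by (rule eq_matI) (use z fYc in auto)
  then have Y0: "?Y = 0\<^sub>m (Suc d) (Suc d)" using iso_inj[OF f Yc] iso_zero[OF f] by auto
  show ?thesis
  proof (rule eq_matI)
    fix r c assume rc: "r < dim_row (1\<^sub>m (Suc d))" "c < dim_col (1\<^sub>m (Suc d))"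
    have "?Y $$ (r,c) = 0" using Y0 rc by simp
    then show "?S $$ (r,c) = 1\<^sub>m (Suc d) $$ (r,c)" using Sc rc by simp
  qed (use Sc in auto)
qed

lemma msum_A_msum:
  assumes "\<And>j. j \<in> set xs \<Longrightarrow> j \<le> d" "\<And>j. j \<in> set ys \<Longrightarrow> j \<le> d"
  shows "msum (Suc d) Es xs * A * msum (Suc d) Es ys = msum (Suc d) (\<lambda>j. msum (Suc d) (\<lambda>l. Es j * A * Es l) ys) xs"
proof -
  have "msum (Suc d) Es xs * A = msum (Suc d) (\<lambda>j. Es j * A) xs" by (rule msum_mult) auto
  moreover have "msum (Suc d) (\<lambda>j. Es j * A) xs * msum (Suc d) Es ys = msum (Suc d) (\<lambda>j. Es j * A * msum (Suc d) Es ys) xs"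
    by (rule msum_mult) (auto intro!: msum_carrier)
  moreover have "Es j * A * msum (Suc d) Es ys = msum (Suc d) (\<lambda>l. Es j * A * Es l) ys" for j
    by (rule mult_msum) auto
  ultimately show ?thesis by simp
qed

abbreviation "PP \<equiv> msum (Suc d) Es [0..<i]"
abbreviation "QQ \<equiv> msum (Suc d) Es [i..<Suc d]"

lemma PP_car[simp]: "PP \<in> carrier_mat (Suc d) (Suc d)" by (rule msum_carrier) simp
lemma QQ_car[simp]: "QQ \<in> carrier_mat (Suc d) (Suc d)" by (rule msum_carrier) simp

lemma PQ: "PP + QQ = 1\<^sub>m (Suc d)"
proof -
  have "[0..<Suc d] = [0..<i] @ [i..<Suc d]" using upt_add_eq_append[of 0 i "Suc d - i"] i2 by simp
  then have "msum (Suc d) Es [0..<Suc d] = PP + QQ" by (simp add: msum_append)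
  then show ?thesis using Es_sum by simp
qed

lemma up_i: "[0..<i] = [0..<i - 1] @ (i - 1) # []"
  using i1 upt_Suc[of 0 "i - 1"] by simp
lemma up_i2: "[i..<Suc d] = [] @ i # [Suc i..<Suc d]"
  using i2 by (simp add: upt_conv_Cons)

lemma PAQ: "PP * A * QQ = Es (i - 1) * A * Es i"
proof -
  have "PP * A * QQ = msum (Suc d) (\<lambda>j. msum (Suc d) (\<lambda>l. Es j * A * Es l) [i..<Suc d]) [0..<i]"
    by (rule msum_A_msum) (use i2 in auto)
  also have "\<dots> = msum (Suc d) (\<lambda>j. msum (Suc d) (\<lambda>l. Es j * A * Es l) [i..<Suc d]) ([0..<i - 1] @ (i - 1) # [])"
    by (subst up_i) (rule refl)
  also have "\<dots> = msum (Suc d) (\<lambda>l. Es (i - 1) * A * Es l) [i..<Suc d]"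
  proof (rule msum_single)
    fix k assume "k \<in> set ([0..<i - 1] @ [])"
    then have k: "k < i - 1" by simp
    show "msum (Suc d) (\<lambda>l. Es k * A * Es l) [i..<Suc d] = 0\<^sub>m (Suc d) (Suc d)"
      by (rule msum_zero) (use k i2 tri in auto)
  qed (auto intro!: msum_carrier)
  also have "\<dots> = msum (Suc d) (\<lambda>l. Es (i - 1) * A * Es l) ([] @ i # [Suc i..<Suc d])"
    by (subst up_i2) (rule refl)
  also have "\<dots> = Es (i - 1) * A * Es i"
    by (rule msum_single) (use i1 i2 tri in auto)
  finally show ?thesis .
qed

lemma QAP: "QQ * A * PP = Es i * A * Es (i - 1)"
proof -
  have "QQ * A * PP = msum (Suc d) (\<lambda>j. msum (Suc d) (\<lambda>l. Es j * A * Es l) [0..<i]) [i..<Suc d]"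
    by (rule msum_A_msum) (use i2 in auto)
  also have "\<dots> = msum (Suc d) (\<lambda>j. msum (Suc d) (\<lambda>l. Es j * A * Es l) [0..<i]) ([] @ i # [Suc i..<Suc d])"
    by (subst up_i2) (rule refl)
  also have "\<dots> = msum (Suc d) (\<lambda>l. Es i * A * Es l) [0..<i]"
  proof (rule msum_single)
    fix k assume "k \<in> set ([] @ [Suc i..<Suc d])"
    then have k: "i < k" "k \<le> d" by auto
    show "msum (Suc d) (\<lambda>l. Es k * A * Es l) [0..<i] = 0\<^sub>m (Suc d) (Suc d)"
      by (rule msum_zero) (use k i2 tri in auto)
  qed (auto intro!: msum_carrier)
  also have "\<dots> = msum (Suc d) (\<lambda>l. Es i * A * Es l) ([0..<i - 1] @ (i - 1) # [])"
    by (subst up_i) (rule refl)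
  also have "\<dots> = Es i * A * Es (i - 1)"
    by (rule msum_single) (use i1 i2 tri in auto)
  finally show ?thesis .
qed

lemma sym_tr: "mat_tr (EF * (Es (i - 1) * A * Es i)) = mat_tr (EF * (Es i * A * Es (i - 1)))"
proof -
  let ?F = EF and ?P = PP and ?Q = QQ
  have c: "?F \<in> carrier_mat (Suc d) (Suc d)" "?P \<in> carrier_mat (Suc d) (Suc d)" "?Q \<in> carrier_mat (Suc d) (Suc d)"
    "A \<in> carrier_mat (Suc d) (Suc d)" by auto
  have AF: "A * ?F = ?F * A" by (rule pA.E_commute)
  have AQ: "A * ?Q \<in> carrier_mat (Suc d) (Suc d)" by (rule mult_carrier_mat[OF A_car QQ_car])
  have AP: "A * ?P \<in> carrier_mat (Suc d) (Suc d)" by (rule mult_carrier_mat[OF A_car PP_car])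
  have APc: "?P * (A * ?Q) \<in> carrier_mat (Suc d) (Suc d)" "?P * (A * ?P) \<in> carrier_mat (Suc d) (Suc d)"
    "?Q * (A * ?P) \<in> carrier_mat (Suc d) (Suc d)"
    by (rule mult_carrier_mat[OF PP_car AQ], rule mult_carrier_mat[OF PP_car AP], rule mult_carrier_mat[OF QQ_car AP])
  have t1: "mat_tr (?F * (?P * (A * ?Q))) + mat_tr (?F * (?P * (A * ?P))) = mat_tr (?F * (?P * A))"
  proof -
    have e1: "A * (?Q + ?P) = A * ?Q + A * ?P" by (rule mult_add_distrib_mat[of A "Suc d" "Suc d" _ "Suc d"]) (use AQ AP APc in auto)
    have e2: "?P * (A * ?Q + A * ?P) = ?P * (A * ?Q) + ?P * (A * ?P)"
      by (rule mult_add_distrib_mat[of ?P "Suc d" "Suc d" _ "Suc d"]) (use AQ AP APc in auto)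
    have e3: "?F * (?P * (A * ?Q) + ?P * (A * ?P)) = ?F * (?P * (A * ?Q)) + ?F * (?P * (A * ?P))"
      by (rule mult_add_distrib_mat[of ?F "Suc d" "Suc d" _ "Suc d"]) (use AQ AP APc in auto)
    have qp: "?Q + ?P = 1\<^sub>m (Suc d)" using PQ c by (simp add: comm_add_mat[of ?Q "Suc d" "Suc d"])
    have "?F * (?P * (A * ?Q)) + ?F * (?P * (A * ?P)) = ?F * (?P * (A * (?Q + ?P)))"
      by (simp only: e1 e2 e3)
    also have "\<dots> = ?F * (?P * A)" by (simp only: qp right_mult_one_mat[OF A_car])
    finally have e: "?F * (?P * (A * ?Q)) + ?F * (?P * (A * ?P)) = ?F * (?P * A)" .
    show ?thesis unfolding e[symmetric]
      by (rule mat_tr_add[OF mult_carrier_mat[OF EA_car APc(1)] mult_carrier_mat[OF EA_car APc(2)], symmetric])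
  qed
  have t2: "mat_tr (?F * (?Q * (A * ?P))) + mat_tr (?F * (?P * (A * ?P))) = mat_tr (?F * (A * ?P))"
  proof -
    have e1: "(?Q + ?P) * (A * ?P) = ?Q * (A * ?P) + ?P * (A * ?P)"
      by (rule add_mult_distrib_mat[of ?Q "Suc d" "Suc d" ?P]) (use AQ AP APc in auto)
    have e3: "?F * (?Q * (A * ?P) + ?P * (A * ?P)) = ?F * (?Q * (A * ?P)) + ?F * (?P * (A * ?P))"
      by (rule mult_add_distrib_mat[of ?F "Suc d" "Suc d" _ "Suc d"]) (use AQ AP APc in auto)
    have qp: "?Q + ?P = 1\<^sub>m (Suc d)" using PQ c by (simp add: comm_add_mat[of ?Q "Suc d" "Suc d"])
    have "?F * (?Q * (A * ?P)) + ?F * (?P * (A * ?P)) = ?F * ((?Q + ?P) * (A * ?P))"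
      by (simp only: e1 e3)
    also have "\<dots> = ?F * (A * ?P)" by (simp only: qp left_mult_one_mat[OF AP])
    finally have e: "?F * (?Q * (A * ?P)) + ?F * (?P * (A * ?P)) = ?F * (A * ?P)" .
    show ?thesis unfolding e[symmetric]
      by (rule mat_tr_add[OF mult_carrier_mat[OF EA_car APc(3)] mult_carrier_mat[OF EA_car APc(2)], symmetric])
  qed
  have t3: "mat_tr (?F * (?P * A)) = mat_tr (?F * (A * ?P))"
  proof -
    have "mat_tr ((?F * ?P) * A) = mat_tr (A * (?F * ?P))"
      by (rule mat_tr_comm[OF mult_carrier_mat[OF EA_car PP_car] A_car])
    also have "A * (?F * ?P) = (A * ?F) * ?P" by (rule assoc_mult_mat[OF A_car EA_car PP_car, symmetric])
    also have "\<dots> = (?F * A) * ?P" using AF by simp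
    also have "\<dots> = ?F * (A * ?P)" by (rule assoc_mult_mat[OF EA_car A_car PP_car])
    finally show ?thesis using assoc_mult_mat[OF EA_car PP_car A_car] by simp
  qed
  have "mat_tr (?F * (?P * (A * ?Q))) + mat_tr (?F * (?P * (A * ?P))) = mat_tr (?F * (?Q * (A * ?P))) + mat_tr (?F * (?P * (A * ?P)))"
    using t1 t2 t3 by simp
  then have "mat_tr (?F * (?P * (A * ?Q))) = mat_tr (?F * (?Q * (A * ?P)))" by simp
  moreover have "Es (i - 1) * A * Es i = ?P * (A * ?Q)" using PAQ assoc_mult_mat[OF PP_car A_car QQ_car] by simp
  moreover have "Es i * A * Es (i - 1) = ?Q * (A * ?P)" using QAP assoc_mult_mat[OF QQ_car A_car PP_car] by simp
  ultimately show ?thesis by simp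
qed

end


declare upt_Suc[simp del]

lemma rk_apply:
  fixes E :: "'a::field mat"
  assumes E: "E \<in> carrier_mat n n" and X: "X \<in> carrier_mat n n" and R: "R \<in> carrier_mat n m"
    and r: "E * X * E = c \<cdot>\<^sub>m E"
  shows "E * (X * (E * R)) = c \<cdot>\<^sub>m (E * R)"
proof -
  have "E * (X * (E * R)) = (E * X * E) * R"
    by (simp add: assoc_mult_mat[OF E X E] assoc_mult_mat[OF E mult_carrier_mat[OF X E] R] assoc_mult_mat[OF X E R])
  also have "\<dots> = c \<cdot>\<^sub>m (E * R)" using r E R by (simp add: mult_smult_assoc_mat[of E n n R m])
  finally show ?thesis .
qed

context ubd
begin

lemma rowfac:
  assumes idem: "P * P = P" and nz: "P \<noteq> 0\<^sub>m (Suc d) (Suc d)" and Y: "Y \<in> carrier_mat (Suc d) m"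
    and r: "r \<le> d" and c: "c < m"
  shows "(P * Y) $$ (r,c) = P $$ (r,j) * (P * Y) $$ (j,c)"
proof -
  have "(P * Y) $$ (r,c) = (\<Sum>k<Suc d. P $$ (r,k) * Y $$ (k,c))" using P Y r c by (intro mult_entry) auto
  also have "\<dots> = (\<Sum>k<Suc d. P $$ (r,j) * (P $$ (j,k) * Y $$ (k,c)))"
    by (intro sum.cong refl) (use U4'[OF idem nz r] in \<open>auto simp: mult_ac\<close>)
  also have "\<dots> = P $$ (r,j) * (\<Sum>k<Suc d. P $$ (j,k) * Y $$ (k,c))" by (rule sum_distrib_left[symmetric])
  also have "(\<Sum>k<Suc d. P $$ (j,k) * Y $$ (k,c)) = (P * Y) $$ (j,c)" using P Y j c by (intro mult_entry[symmetric]) auto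
  finally show ?thesis .
qed

lemma colfac:
  assumes idem: "P * P = P" and nz: "P \<noteq> 0\<^sub>m (Suc d) (Suc d)" and Y: "Y \<in> carrier_mat m (Suc d)"
    and r: "r < m" and c: "c \<le> d"
  shows "(Y * P) $$ (r,c) = (Y * P) $$ (r,j) * P $$ (j,c)"
proof -
  have "(Y * P) $$ (r,c) = (\<Sum>k<Suc d. Y $$ (r,k) * P $$ (k,c))" using P Y r c by (intro mult_entry) auto
  also have "\<dots> = (\<Sum>k<Suc d. (Y $$ (r,k) * P $$ (k,j)) * P $$ (j,c))"
    by (intro sum.cong refl) (use U4'[OF idem nz _ c] in \<open>auto simp: mult_ac\<close>)
  also have "\<dots> = (\<Sum>k<Suc d. Y $$ (r,k) * P $$ (k,j)) * P $$ (j,c)" by (rule sum_distrib_right[symmetric])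
  also have "(\<Sum>k<Suc d. Y $$ (r,k) * P $$ (k,j)) = (Y * P) $$ (r,j)" using P Y j r by (intro mult_entry[symmetric]) auto
  finally show ?thesis .
qed

lemma diag0:
  assumes idem: "P * P = P" and nz: "P \<noteq> 0\<^sub>m (Suc d) (Suc d)"
  shows "P $$ (0,j) * (\<Prod>k\<in>{0..<j}. \<delta> j - \<delta> k) = (\<Prod>k\<in>{Suc 0..j}. \<sigma> k)"
  using colprod[of 0 j] U3[OF idem nz] j by simp

lemma diagd:
  assumes idem: "P * P = P" and nz: "P \<noteq> 0\<^sub>m (Suc d) (Suc d)"
  shows "P $$ (j,d) * (\<Prod>k\<in>{Suc j..d}. \<delta> j - \<delta> k) = (\<Prod>k\<in>{Suc j..d}. \<sigma> k)"
  using rowprod[of d j] U3[OF idem nz] j by simp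

lemma diag0_nz:
  assumes idem: "P * P = P" and nz: "P \<noteq> 0\<^sub>m (Suc d) (Suc d)"
  shows "P $$ (0,j) \<noteq> 0"
  using diag0[OF idem nz] snz1[of 0] by auto

lemma diagd_nz:
  assumes idem: "P * P = P" and nz: "P \<noteq> 0\<^sub>m (Suc d) (Suc d)"
  shows "P $$ (j,d) \<noteq> 0"
  using diagd[OF idem nz] snz2[of d] by auto

end

context LSx
begin

lemma sq_car[simp]: fixes X Y :: "'a mat" shows "X \<in> carrier_mat (Suc d) (Suc d) \<Longrightarrow> Y \<in> carrier_mat (Suc d) (Suc d) \<Longrightarrow> X * Y \<in> carrier_mat (Suc d) (Suc d)"
  by simp
lemma sq_assoc: fixes X Y Z :: "'a mat" shows "X \<in> carrier_mat (Suc d) (Suc d) \<Longrightarrow> Y \<in> carrier_mat (Suc d) (Suc d) \<Longrightarrow> Z \<in> carrier_mat (Suc d) (Suc d)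
  \<Longrightarrow> X * Y * Z = X * (Y * Z)"
  by (rule assoc_mult_mat)
lemma sq_sl: fixes X Y Z :: "'a mat" shows "X \<in> carrier_mat (Suc d) (Suc d) \<Longrightarrow> Y \<in> carrier_mat (Suc d) (Suc d) \<Longrightarrow> (c \<cdot>\<^sub>m X) * Y = c \<cdot>\<^sub>m (X * Y)"
  by (rule mult_smult_assoc_mat)
lemma sq_sr: fixes X Y Z :: "'a mat" shows "X \<in> carrier_mat (Suc d) (Suc d) \<Longrightarrow> Y \<in> carrier_mat (Suc d) (Suc d) \<Longrightarrow> X * (c \<cdot>\<^sub>m Y) = c \<cdot>\<^sub>m (X * Y)"
  by (rule mult_smult_distrib)
lemma sq_tr_smult: fixes X Y Z :: "'a mat" shows "X \<in> carrier_mat (Suc d) (Suc d) \<Longrightarrow> mat_tr (c \<cdot>\<^sub>m X) = c * mat_tr X"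
  by (rule mat_tr_smult)

lemmas sq_simps = sq_assoc sq_sl sq_sr sq_tr_smult

lemma x_id:
  "mat_tr (Es i * A * Es (i - 1) * A) * mat_tr (EF * Es i) * mat_tr (EF * Es (i - 1))
   = mat_tr (EF * (Es i * A * Es (i - 1))) * mat_tr (EF * (Es (i - 1) * A * Es i))"
proof -
  let ?a = "Es i" and ?b = "Es (i - 1)" and ?F = EF
  have ca: "?a \<in> carrier_mat (Suc d) (Suc d)" and cb: "?b \<in> carrier_mat (Suc d) (Suc d)"
    and cF: "?F \<in> carrier_mat (Suc d) (Suc d)" and cA: "A \<in> carrier_mat (Suc d) (Suc d)" by auto
  let ?Z1 = "?a * A * ?b" and ?Z2 = "?b * A * ?a"
  have Z1c: "?Z1 \<in> carrier_mat (Suc d) (Suc d)" and Z2c: "?Z2 \<in> carrier_mat (Suc d) (Suc d)"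
    using ca cb cA by auto
  let ?N = "mat_tr (?F * ?Z1)" and ?N' = "mat_tr (?F * ?Z2)"
  let ?Ta = "mat_tr (?F * ?a)" and ?Tb = "mat_tr (?F * ?b)"
  have r1: "?F * ?Z1 * ?F = ?N \<cdot>\<^sub>m ?F"
    using rank_F[OF Z1c] mat_tr_comm[OF Z1c cF] by simp
  have r2: "?a * ?F * ?a = ?Ta \<cdot>\<^sub>m ?a"
    using rank_Es[OF i2 cF] mat_tr_comm[OF cF ca] by simp
  have r3: "?b * ?F * ?b = ?Tb \<cdot>\<^sub>m ?b"
    using rank_Es[of "i - 1", OF _ cF] mat_tr_comm[OF cF cb] i2 by simp
  have K1: "mat_tr (?F * ?Z1 * ?F * ?Z2) = ?N * ?N'"
  proof -
    have "?F * ?Z1 * ?F * ?Z2 = ?N \<cdot>\<^sub>m (?F * ?Z2)"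
      using r1 cF Z2c Z1c by (simp add: sq_sl)
    then show ?thesis using cF Z2c by (simp add: sq_tr_smult)
  qed
  let ?W = "?F * (?a * (A * (?b * (?F * (?b * A)))))"
  have Wc: "?W \<in> carrier_mat (Suc d) (Suc d)" using ca cb cF cA by simp
  have K2: "?F * ?Z1 * ?F * ?Z2 = ?W * ?a" using ca cb cF cA by (simp add: sq_simps)
  have K3: "?a * ?W = (?Ta * ?Tb) \<cdot>\<^sub>m (?a * (A * (?b * A)))"
  proof -
    have s1: "?b * (?F * (?b * A)) = ?Tb \<cdot>\<^sub>m (?b * A)"
      by (rule rk_apply[OF cb cF cA r3])
    have "?a * ?W = ?Ta \<cdot>\<^sub>m (?a * (A * (?b * (?F * (?b * A)))))"
      by (rule rk_apply[OF ca cF _ r2, where m="Suc d"]) (use ca cb cF cA in \<open>simp add: sq_simps\<close>)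
    also have "\<dots> = ?Ta \<cdot>\<^sub>m (?a * (A * (?Tb \<cdot>\<^sub>m (?b * A))))" by (simp only: s1)
    also have "\<dots> = ?Ta \<cdot>\<^sub>m (?Tb \<cdot>\<^sub>m (?a * (A * (?b * A))))"
      using ca cb cA by (simp add: sq_simps)
    finally show ?thesis by (simp add: smult_smult_mat')
  qed
  have "mat_tr (?F * ?Z1 * ?F * ?Z2) = mat_tr (?a * ?W)"
    unfolding K2 by (rule mat_tr_comm[OF Wc ca])
  also have "\<dots> = ?Ta * ?Tb * mat_tr (?a * (A * (?b * A)))"
    unfolding K3 by (rule sq_tr_smult) (use ca cb cA in simp)
  also have "?a * (A * (?b * A)) = ?a * A * ?b * A" using ca cb cA by (simp add: sq_simps)
  finally show ?thesis using K1 by (simp add: mult_ac)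
qed


lemma me: "X \<in> carrier_mat (Suc d) (Suc d) \<Longrightarrow> Y \<in> carrier_mat (Suc d) (Suc d) \<Longrightarrow> r \<le> d \<Longrightarrow> c \<le> d \<Longrightarrow>
  (X * Y) $$ (r,c) = (\<Sum>k<Suc d. X $$ (r,k) * Y $$ (k,c))"
  by (rule mult_entry) auto

lemma iso3:
  assumes h: "alg_iso (Suc d) h" and X: "X \<in> carrier_mat (Suc d) (Suc d)" and Y: "Y \<in> carrier_mat (Suc d) (Suc d)"
    and Z: "Z \<in> carrier_mat (Suc d) (Suc d)"
  shows "h (X * Y * Z) = h X * h Y * h Z"
proof -
  have "h (X * Y * Z) = h (X * Y) * h Z" by (rule iso_mult[OF h _ Z]) (use X Y in simp)
  also have "h (X * Y) = h X * h Y" by (rule iso_mult[OF h X Y])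
  finally show ?thesis .
qed

lemma fdims[simp]: "dim_row (f EF) = Suc d" "dim_col (f EF) = Suc d" "dim_row (g EF) = Suc d" "dim_col (g EF) = Suc d"
  "dim_row (f (Es j)) = Suc d" "dim_col (f (Es j)) = Suc d" "dim_row (g (Es j)) = Suc d" "dim_col (g (Es j)) = Suc d"
  using carrier_matD[OF fF_car] carrier_matD[OF gF_car] carrier_matD[OF fEs_car] carrier_matD[OF gEs_car] by auto

lemma P0_col: "a \<le> d \<Longrightarrow> 0 < b \<Longrightarrow> b \<le> d \<Longrightarrow> f EF $$ (a,b) = 0"
proof -
  assume a: "a \<le> d" and b: "0 < b" "b \<le> d"
  interpret u: ubd d \<theta> "\<lambda>_. 1" 0 "transpose_mat (f EF)" by (rule ubd_fF)
  have "transpose_mat (f EF) $$ (b,a) = 0" using u.U1[of b a] a b by simp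
  then show ?thesis using a b by simp
qed

lemma P0_00: "f EF $$ (0,0) = 1"
proof -
  interpret u: ubd d \<theta> "\<lambda>_. 1" 0 "transpose_mat (f EF)" by (rule ubd_fF)
  have "transpose_mat (f EF) $$ (0,0) = 1"
    by (rule u.U3) (use transpose_idem[OF fF_car fF_idem] transpose_nz[OF fF_car fF_nz] in auto)
  then show ?thesis by simp
qed

lemma F'_row: "r < d \<Longrightarrow> c \<le> d \<Longrightarrow> g EF $$ (r,c) = 0"
proof -
  assume r: "r < d" and c: "c \<le> d"
  interpret u: ubd d "\<lambda>r. \<theta> (d - r)" "\<lambda>_. 1" d "transpose_mat (g EF)" by (rule ubd_gF)
  have "transpose_mat (g EF) $$ (c,r) = 0" using u.U2[of r c] r c by simp
  then show ?thesis using r c by simp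
qed

lemma F'_dd: "g EF $$ (d,d) = 1"
proof -
  interpret u: ubd d "\<lambda>r. \<theta> (d - r)" "\<lambda>_. 1" d "transpose_mat (g EF)" by (rule ubd_gF)
  have "transpose_mat (g EF) $$ (d,d) = 1"
    by (rule u.U3) (use transpose_idem[OF gF_car gF_idem] transpose_nz[OF gF_car gF_nz] in auto)
  then show ?thesis by simp
qed

lemma P0_sandwich:
  assumes X: "X \<in> carrier_mat (Suc d) (Suc d)"
  shows "(f EF * X * f EF) $$ (0,0) = (X * f EF) $$ (0,0)"
proof -
  have "(f EF * X * f EF) $$ (0,0) = (f EF * (X * f EF)) $$ (0,0)"
    using X by (simp add: sq_assoc)
  also have "\<dots> = (\<Sum>k<Suc d. f EF $$ (0,k) * (X * f EF) $$ (k,0))" using X by (intro me) auto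
  also have "\<dots> = (\<Sum>k<Suc d. if k = 0 then (X * f EF) $$ (0,0) else 0)"
    by (intro sum.cong refl) (auto simp: P0_col P0_00)
  also have "\<dots> = (X * f EF) $$ (0,0)" by simp
  finally show ?thesis .
qed

lemma F'_sandwich:
  assumes X: "X \<in> carrier_mat (Suc d) (Suc d)"
  shows "(g EF * X * g EF) $$ (d,d) = (g EF * X) $$ (d,d)"
proof -
  have "(g EF * X * g EF) $$ (d,d) = (\<Sum>k<Suc d. (g EF * X) $$ (d,k) * g EF $$ (k,d))" using X by (intro me) auto
  also have "\<dots> = (\<Sum>k<Suc d. if k = d then (g EF * X) $$ (d,d) else 0)"
    by (intro sum.cong refl) (auto simp: F'_row F'_dd)
  also have "\<dots> = (g EF * X) $$ (d,d)" by simp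
  finally show ?thesis .
qed

lemma rankF_iso:
  assumes h: "alg_iso (Suc d) h" and X: "X \<in> carrier_mat (Suc d) (Suc d)"
  shows "h EF * h X * h EF = mat_tr (EF * X) \<cdot>\<^sub>m h EF"
proof -
  have "EF * X * EF = mat_tr (EF * X) \<cdot>\<^sub>m EF" using rank_F[OF X] mat_tr_comm[OF X EA_car] by simp
  then have "h (EF * X * EF) = h (mat_tr (EF * X) \<cdot>\<^sub>m EF)" by simp
  then show ?thesis using iso3[OF h EA_car X EA_car] iso_smult[OF h EA_car] by simp
qed

lemma T_f: "j \<le> d \<Longrightarrow> mat_tr (EF * Es j) = (f (Es j) * f EF) $$ (0,0)"
  using rankF_iso[OF f Es_car[of j]] P0_sandwich[OF fEs_car[of j]] P0_00 by simp

lemma T_g: "j \<le> d \<Longrightarrow> mat_tr (EF * Es j) = (g EF * g (Es j)) $$ (d,d)"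
  using rankF_iso[OF g Es_car[of j]] F'_sandwich[OF gEs_car[of j]] F'_dd by simp

lemma N_f: "mat_tr (EF * (Es i * A * Es (i - 1))) =
   f (Es i) $$ (0,i) * (f (Es (i - 1)) * f EF) $$ (i - 1, 0)"
proof -
  let ?Pi = "f (Es i)" and ?Pm = "f (Es (i - 1))" and ?L = "lower_bidiag d \<theta>" and ?P0 = "f EF"
  let ?W = "?Pm * ?P0"
  interpret ui: ubd d \<theta>s \<phi> i ?Pi by (rule ubd_f[OF i2])
  interpret um: ubd d \<theta>s \<phi> "i - 1" ?Pm by (rule ubd_f) (use i2 in simp)
  have im: "i - 1 \<le> d" using i2 by simp
  have Wc: "?W \<in> carrier_mat (Suc d) (Suc d)" by simp
  have Lc: "?L \<in> carrier_mat (Suc d) (Suc d)" by simp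
  have Z1c: "Es i * A * Es (i - 1) \<in> carrier_mat (Suc d) (Suc d)" by simp
  have fZ: "f (Es i * A * Es (i - 1)) = ?Pi * ?L * ?Pm" using iso3[OF f Es_car A_car Es_car] fA by simp
  have "mat_tr (EF * (Es i * A * Es (i - 1))) = (?P0 * (?Pi * ?L * ?Pm) * ?P0) $$ (0,0)"
    using rankF_iso[OF f Z1c] fZ P0_00 by simp
  also have "\<dots> = (?Pi * ?L * ?Pm * ?P0) $$ (0,0)" by (rule P0_sandwich) simp
  also have "?Pi * ?L * ?Pm * ?P0 = ?Pi * (?L * ?W)" by (simp add: sq_assoc)
  also have "(?Pi * (?L * ?W)) $$ (0,0) = ?Pi $$ (0,i) * (?Pi * (?L * ?W)) $$ (i,0)"
    by (rule ui.rowfac[OF fEs_idem[OF i2] fEs_nz[OF i2]]) auto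
  also have "(?Pi * (?L * ?W)) $$ (i,0) = ?W $$ (i - 1, 0)"
  proof -
    have W0: "?W $$ (c,0) = 0" if "i - 1 < c" "c \<le> d" for c
    proof -
      have "?W $$ (c,0) = (\<Sum>k<Suc d. ?Pm $$ (c,k) * ?P0 $$ (k,0))" using that by (intro me) auto
      also have "\<dots> = 0" by (intro sum.neutral ballI) (use um.U1 that in auto)
      finally show ?thesis .
    qed
    have "(?Pi * (?L * ?W)) $$ (i,0) = (\<Sum>c<Suc d. ?Pi $$ (i,c) * (?L * ?W) $$ (c,0))"
      using i2 by (intro me) auto
    also have "\<dots> = (\<Sum>c<Suc d. if c = i then ?W $$ (i - 1, 0) else 0)"
    proof (intro sum.cong refl)
      fix c assume c: "c \<in> {..<Suc d}"
      have LW: "(?L * ?W) $$ (c,0) = \<theta> c * ?W $$ (c,0) + (if 0 < c then ?W $$ (c - 1, 0) else 0)"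
        by (rule lower_mult_entry) (use c in auto)
      consider "c < i" | "c = i" | "i < c" by linarith
      then show "?Pi $$ (i,c) * (?L * ?W) $$ (c,0) = (if c = i then ?W $$ (i - 1, 0) else 0)"
      proof cases
        case 1 then show ?thesis using ui.U2[of c i] i2 by simp
      next
        case 2 then show ?thesis using LW W0[of i] i1 i2 ui.U3[OF fEs_idem[OF i2] fEs_nz[OF i2]] by simp
      next
        case 3 then show ?thesis using LW W0[of c] W0[of "c - 1"] c i1 by auto
      qed
    qed
    also have "\<dots> = ?W $$ (i - 1, 0)" by (subst sum.delta) (use i2 in simp_all)
    finally show ?thesis .
  qed
  finally show ?thesis .
qed

lemma T_f2: "j \<le> d \<Longrightarrow> mat_tr (EF * Es j) = f (Es j) $$ (0,j) * (f (Es j) * f EF) $$ (j, 0)"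
proof -
  assume j: "j \<le> d"
  interpret u: ubd d \<theta>s \<phi> j "f (Es j)" by (rule ubd_f[OF j])
  show ?thesis using T_f[OF j] u.rowfac[OF fEs_idem[OF j] fEs_nz[OF j] fF_car, of 0 0] by simp
qed

lemma f_rel: "mat_tr (EF * (Es i * A * Es (i - 1))) * f (Es (i - 1)) $$ (0, i - 1)
   = f (Es i) $$ (0,i) * mat_tr (EF * Es (i - 1))"
  using N_f T_f2[of "i - 1"] i2 by (simp add: mult_ac)


lemma N_g: "mat_tr (EF * (Es i * A * Es (i - 1))) =
   (g EF * g (Es i)) $$ (d, i) * g (Es (i - 1)) $$ (i - 1, d)"
proof -
  let ?Qi = "g (Es i)" and ?Qm = "g (Es (i - 1))" and ?L = "lower_bidiag d (\<lambda>i. \<theta> (d - i))" and ?F = "g EF"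
  let ?W = "?F * ?Qi"
  let ?V = "?W * ?L"
  interpret ui: ubd d \<theta>s \<phi>' i ?Qi by (rule ubd_g[OF i2])
  interpret um: ubd d \<theta>s \<phi>' "i - 1" ?Qm by (rule ubd_g) (use i2 in simp)
  have Vc: "?V \<in> carrier_mat (Suc d) (Suc d)" by simp
  have Z1c: "Es i * A * Es (i - 1) \<in> carrier_mat (Suc d) (Suc d)" by simp
  have gZ: "g (Es i * A * Es (i - 1)) = ?Qi * ?L * ?Qm" using iso3[OF g Es_car A_car Es_car] gA by simp
  have W0: "?W $$ (d,c) = 0" if "c < i" for c
  proof -
    have "?W $$ (d,c) = (\<Sum>k<Suc d. ?F $$ (d,k) * ?Qi $$ (k,c))" using that i2 by (intro me) auto
    also have "\<dots> = 0" by (intro sum.neutral ballI) (use ui.U2 that in auto)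
    finally show ?thesis .
  qed
  have "mat_tr (EF * (Es i * A * Es (i - 1))) = (?F * (?Qi * ?L * ?Qm) * ?F) $$ (d,d)"
    using rankF_iso[OF g Z1c] gZ F'_dd by simp
  also have "\<dots> = (?F * (?Qi * ?L * ?Qm)) $$ (d,d)" by (rule F'_sandwich) simp
  also have "?F * (?Qi * ?L * ?Qm) = ?V * ?Qm" by (simp add: sq_assoc)
  also have "(?V * ?Qm) $$ (d,d) = (?V * ?Qm) $$ (d, i - 1) * ?Qm $$ (i - 1, d)"
    by (rule um.colfac[OF gEs_idem gEs_nz Vc]) (use i2 in auto)
  also have "(?V * ?Qm) $$ (d, i - 1) = ?W $$ (d, i)"
  proof -
    have "(?V * ?Qm) $$ (d, i - 1) = (\<Sum>r<Suc d. ?V $$ (d,r) * ?Qm $$ (r, i - 1))"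
      using i2 by (intro me) auto
    also have "\<dots> = (\<Sum>r<Suc d. if r = i - 1 then ?W $$ (d, i) else 0)"
    proof (intro sum.cong refl)
      fix r assume r: "r \<in> {..<Suc d}"
      have Ve: "?V $$ (d,r) = ?W $$ (d,r) * (\<lambda>i. \<theta> (d - i)) r + (if r < d then ?W $$ (d, Suc r) else 0)"
        by (rule mult_lower_entry) (use r in auto)
      consider "r < i - 1" | "r = i - 1" | "i - 1 < r" by linarith
      then show "?V $$ (d,r) * ?Qm $$ (r, i - 1) = (if r = i - 1 then ?W $$ (d, i) else 0)"
      proof cases
        case 1 then show ?thesis using Ve W0[of r] W0[of "Suc r"] i1 by auto
      next
        case 2 then show ?thesis using Ve W0[of r] i1 i2 um.U3[OF gEs_idem gEs_nz] by auto
      next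
        case 3 then show ?thesis using um.U1[of r "i - 1"] r by auto
      qed
    qed
    also have "\<dots> = ?W $$ (d, i)" by (subst sum.delta) (use i2 in simp_all)
    finally show ?thesis .
  qed
  finally show ?thesis .
qed

lemma T_g2: "j \<le> d \<Longrightarrow> mat_tr (EF * Es j) = (g EF * g (Es j)) $$ (d,j) * g (Es j) $$ (j, d)"
proof -
  assume j: "j \<le> d"
  interpret u: ubd d \<theta>s \<phi>' j "g (Es j)" by (rule ubd_g[OF j])
  show ?thesis using T_g[OF j] u.colfac[OF gEs_idem[OF j] gEs_nz[OF j] gF_car, of d d] by simp
qed

lemma g_rel: "mat_tr (EF * (Es i * A * Es (i - 1))) * g (Es i) $$ (i, d)
   = g (Es (i - 1)) $$ (i - 1, d) * mat_tr (EF * Es i)"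
  using N_g T_g2[of i] i2 by (simp add: mult_ac)

lemma T_nz: assumes j: "j \<le> d" shows "mat_tr (EF * Es j) \<noteq> 0"
proof
  assume T0: "mat_tr (EF * Es j) = 0"
  interpret u: ubd d \<theta>s \<phi> j "f (Es j)" by (rule ubd_f[OF j])
  interpret v: ubd d \<theta>s \<phi>' j "g (Es j)" by (rule ubd_g[OF j])
  let ?W = "f (Es j) * f EF"
  have "f (Es j) $$ (0,j) * ?W $$ (j,0) = 0" using T_f2[OF j] T0 by simp
  then have Wj: "?W $$ (j,0) = 0" using u.diag0_nz[OF fEs_idem[OF j] fEs_nz[OF j]] by simp
  have "?W = 0\<^sub>m (Suc d) (Suc d)"
  proof (rule eq_matI)
    fix r c assume "r < dim_row (0\<^sub>m (Suc d) (Suc d))" "c < dim_col (0\<^sub>m (Suc d) (Suc d))"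
    then have r: "r \<le> d" and c: "c \<le> d" by auto
    show "?W $$ (r,c) = 0\<^sub>m (Suc d) (Suc d) $$ (r,c)"
    proof (cases "c = 0")
      case True
      then show ?thesis using u.rowfac[OF fEs_idem[OF j] fEs_nz[OF j] fF_car r, of 0] Wj r by simp
    next
      case False
      have "?W $$ (r,c) = (\<Sum>k<Suc d. f (Es j) $$ (r,k) * f EF $$ (k,c))" using r c by (intro me) auto
      also have "\<dots> = 0" by (intro sum.neutral ballI) (use P0_col False c in auto)
      finally show ?thesis using r c by simp
    qed
  qed auto
  then have "f (Es j * EF) = f (0\<^sub>m (Suc d) (Suc d))" using iso_mult[OF f Es_car EA_car] iso_zero[OF f] by simp
  then have "Es j * EF = 0\<^sub>m (Suc d) (Suc d)" using iso_inj[OF f] by simp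
  then have G0: "g (Es j) * g EF = 0\<^sub>m (Suc d) (Suc d)" using iso_mult[OF g Es_car[of j] EA_car[of 0]] iso_zero[OF g] by simp
  have "(g (Es j) * g EF) $$ (j,d) = (\<Sum>k<Suc d. g (Es j) $$ (j,k) * g EF $$ (k,d))" using j by (intro me) auto
  also have "\<dots> = (\<Sum>k<Suc d. if k = d then g (Es j) $$ (j,d) else 0)"
    by (intro sum.cong refl) (auto simp: F'_row F'_dd)
  also have "\<dots> = g (Es j) $$ (j,d)" by simp
  finally have "g (Es j) $$ (j,d) = 0" using G0 j by simp
  then show False using v.diagd_nz[OF gEs_idem[OF j] gEs_nz[OF j]] by simp
qed

end


declare upt_Suc[simp del]

lemma eta_reindex:
  fixes \<theta>s :: "nat \<Rightarrow> 'a::field"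
  shows "m \<le> d \<Longrightarrow> eta_s d \<theta>s m x = (\<Prod>k\<in>{Suc (d - m)..d}. x - \<theta>s k)"
proof (induction m)
  case 0 then show ?case by (simp add: eta_s_def)
next
  case (Suc m)
  then have IH: "eta_s d \<theta>s m x = (\<Prod>k\<in>{Suc (d - m)..d}. x - \<theta>s k)" by simp
  have "eta_s d \<theta>s (Suc m) x = eta_s d \<theta>s m x * (x - \<theta>s (d - m))"
    by (simp add: eta_s_def)
  also have "\<dots> = (x - \<theta>s (d - m)) * (\<Prod>k\<in>{Suc (d - m)..d}. x - \<theta>s k)" using IH by simp
  also have "\<dots> = (\<Prod>k\<in>{d - m..d}. x - \<theta>s k)"
    by (rule prod.atLeast_Suc_atMost[symmetric]) simp
  also have "d - m = Suc (d - Suc m)" using Suc.prems by simp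
  finally show ?case .
qed

context LSx
begin

lemma main:
  "mat_tr (Es i * A * Es (i - 1) * A)
       = \<phi> i * \<phi>' i *
         ((tau_s \<theta>s (i - 1) (\<theta>s (i - 1)) * eta_s d \<theta>s (d - i) (\<theta>s i)) /
          (tau_s \<theta>s i (\<theta>s i) * eta_s d \<theta>s (d - i + 1) (\<theta>s (i - 1))))"
proof -
  have im: "i - 1 \<le> d" using i2 by simp
  define x where "x = mat_tr (Es i * A * Es (i - 1) * A)"
  define N where "N = mat_tr (EF * (Es i * A * Es (i - 1)))"
  define Ti where "Ti = mat_tr (EF * Es i)"
  define Tm where "Tm = mat_tr (EF * Es (i - 1))"
  define ai where "ai = f (Es i) $$ (0,i)"
  define am where "am = f (Es (i - 1)) $$ (0,i - 1)"
  define bi where "bi = g (Es i) $$ (i,d)"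
  define bm where "bm = g (Es (i - 1)) $$ (i - 1,d)"
  interpret fi: ubd d \<theta>s \<phi> i "f (Es i)" by (rule ubd_f[OF i2])
  interpret fm: ubd d \<theta>s \<phi> "i - 1" "f (Es (i - 1))" by (rule ubd_f[OF im])
  interpret gi: ubd d \<theta>s \<phi>' i "g (Es i)" by (rule ubd_g[OF i2])
  interpret gm: ubd d \<theta>s \<phi>' "i - 1" "g (Es (i - 1))" by (rule ubd_g[OF im])
  have xid: "x * Ti * Tm = N * N"
    using x_id sym_tr unfolding x_def Ti_def Tm_def N_def by simp
  have fr: "N * am = ai * Tm" using f_rel unfolding N_def am_def ai_def Tm_def .
  have gr: "N * bi = bm * Ti" using g_rel unfolding N_def bm_def bi_def Ti_def .
  have Tinz: "Ti \<noteq> 0" unfolding Ti_def by (rule T_nz[OF i2])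
  have Tmnz: "Tm \<noteq> 0" unfolding Tm_def by (rule T_nz[OF im])
  have key: "x * am * bi = ai * bm"
  proof -
    have "(x * am * bi) * (Ti * Tm) = (x * Ti * Tm) * am * bi" by (simp add: mult_ac)
    also have "\<dots> = (N * am) * (N * bi)" using xid by (simp add: mult_ac)
    also have "\<dots> = (ai * bm) * (Ti * Tm)" using fr gr by (simp add: mult_ac)
    finally show ?thesis using Tinz Tmnz by simp
  qed
  let ?ti = "\<Prod>k\<in>{0..<i}. \<theta>s i - \<theta>s k" and ?tm = "\<Prod>k\<in>{0..<i - 1}. \<theta>s (i - 1) - \<theta>s k"
  let ?ei = "\<Prod>k\<in>{Suc i..d}. \<theta>s i - \<theta>s k" and ?em = "\<Prod>k\<in>{Suc (i - 1)..d}. \<theta>s (i - 1) - \<theta>s k"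
  let ?Fi = "\<Prod>k\<in>{Suc 0..i}. \<phi> k" and ?Fm = "\<Prod>k\<in>{Suc 0..i - 1}. \<phi> k"
  let ?Gi = "\<Prod>k\<in>{Suc i..d}. \<phi>' k" and ?Gm = "\<Prod>k\<in>{Suc (i - 1)..d}. \<phi>' k"
  have ai_e: "ai * ?ti = ?Fi" unfolding ai_def by (rule fi.diag0[OF fEs_idem[OF i2] fEs_nz[OF i2]])
  have am_e: "am * ?tm = ?Fm" unfolding am_def by (rule fm.diag0[OF fEs_idem[OF im] fEs_nz[OF im]])
  have bi_e: "bi * ?ei = ?Gi" unfolding bi_def by (rule gi.diagd[OF gEs_idem[OF i2] gEs_nz[OF i2]])
  have bm_e: "bm * ?em = ?Gm" unfolding bm_def by (rule gm.diagd[OF gEs_idem[OF im] gEs_nz[OF im]])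
  have tinz: "?ti \<noteq> 0" by (rule fi.pnz1)
  have tmnz: "?tm \<noteq> 0" by (rule fm.pnz1)
  have einz: "?ei \<noteq> 0" by (rule fi.pnz2) simp
  have emnz: "?em \<noteq> 0" by (rule fm.pnz2) simp
  have Fmnz: "?Fm \<noteq> 0" by (rule fm.snz1)
  have Ginz: "?Gi \<noteq> 0" by (rule gi.snz2) simp
  have Fi: "?Fi = ?Fm * \<phi> i"
  proof -
    have "{Suc 0..i} = {Suc 0..Suc (i - 1)}" using i1 by simp
    then have "?Fi = (\<Prod>k\<in>{Suc 0..Suc (i - 1)}. \<phi> k)" by simp
    also have "\<dots> = ?Fm * \<phi> (Suc (i - 1))" by (simp add: prod.cl_ivl_Suc)
    finally show ?thesis using i1 by simp
  qed
  have Gm: "?Gm = \<phi>' i * ?Gi"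
  proof -
    have "?Gm = (\<Prod>k\<in>{i..d}. \<phi>' k)" using i1 by simp
    also have "\<dots> = \<phi>' i * ?Gi" by (rule prod.atLeast_Suc_atMost) (use i2 in simp)
    finally show ?thesis .
  qed
  have tau_i: "tau_s \<theta>s i (\<theta>s i) = ?ti" unfolding tau_s_def by (simp add: lessThan_atLeast0)
  have tau_m: "tau_s \<theta>s (i - 1) (\<theta>s (i - 1)) = ?tm" unfolding tau_s_def by (simp add: lessThan_atLeast0)
  have eta_i: "eta_s d \<theta>s (d - i) (\<theta>s i) = ?ei" using eta_reindex[of "d - i" d \<theta>s "\<theta>s i"] i2 by simp
  have eta_m: "eta_s d \<theta>s (d - i + 1) (\<theta>s (i - 1)) = ?em"
  proof -
    have "eta_s d \<theta>s (d - i + 1) (\<theta>s (i - 1)) = (\<Prod>k\<in>{Suc (d - (d - i + 1))..d}. \<theta>s (i - 1) - \<theta>s k)"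
      by (rule eta_reindex) (use i1 i2 in simp)
    also have "d - (d - i + 1) = i - 1" using i1 i2 by simp
    finally show ?thesis .
  qed
  have phinz: "\<phi> i \<noteq> 0" using phi i1 i2 by simp
  have phi'nz: "\<phi>' i \<noteq> 0" using phi' i1 i2 by simp
  have am_v: "am = ?Fm / ?tm" using am_e tmnz by (simp add: field_simps)
  have ai_v: "ai = ?Fm * \<phi> i / ?ti" using ai_e tinz Fi by (simp add: field_simps)
  have bi_v: "bi = ?Gi / ?ei" using bi_e einz by (simp add: field_simps)
  have bm_v: "bm = \<phi>' i * ?Gi / ?em" using bm_e emnz Gm by (simp add: field_simps)
  have "x * (?Fm / ?tm) * (?Gi / ?ei) = (?Fm * \<phi> i / ?ti) * (\<phi>' i * ?Gi / ?em)"
    using key am_v ai_v bi_v bm_v by simp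
  then have "x = \<phi> i * \<phi>' i * ((?tm * ?ei) / (?ti * ?em))"
    using tmnz einz tinz emnz Fmnz Ginz by (simp add: field_simps)
  then show ?thesis unfolding x_def tau_i tau_m eta_i eta_m .
qed

end


theorem theorem17p8:
  fixes d :: nat
    and A As :: "'a::field mat"
    and \<theta> \<theta>s \<phi> \<phi>' :: "nat \<Rightarrow> 'a"
  assumes LS: "leonard_system d A As \<theta> \<theta>s"
    and split1: "first_split_seq d A As \<theta> \<theta>s \<phi>"
    and split2: "first_split_seq d A As (\<lambda>i. \<theta> (d - i)) \<theta>s \<phi>'"
    and i: "1 \<le> i" "i \<le> d"
  shows "mat_tr (prim_idem d As \<theta>s i * A * prim_idem d As \<theta>s (i - 1) * A)
       = \<phi> i * \<phi>' i *
         ((tau_s \<theta>s (i - 1) (\<theta>s (i - 1)) * eta_s d \<theta>s (d - i) (\<theta>s i)) /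
          (tau_s \<theta>s i (\<theta>s i) * eta_s d \<theta>s (d - i + 1) (\<theta>s (i - 1))))"
proof -
  obtain f where fph: "\<forall>k. 1 \<le> k \<and> k \<le> d \<longrightarrow> \<phi> k \<noteq> 0" and f: "alg_iso (Suc d) f"
    and fA: "f A = lower_bidiag d \<theta>" and fAs: "f As = upper_bidiag d \<theta>s \<phi>"
    using split1 unfolding first_split_seq_def by blast
  obtain g where gph: "\<forall>k. 1 \<le> k \<and> k \<le> d \<longrightarrow> \<phi>' k \<noteq> 0" and g: "alg_iso (Suc d) g"
    and gA: "g A = lower_bidiag d (\<lambda>i. \<theta> (d - i))" and gAs: "g As = upper_bidiag d \<theta>s \<phi>'"
    using split2 unfolding first_split_seq_def by blast
  interpret L: LSx d A As \<theta> \<theta>s \<phi> \<phi>' i f g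
    by unfold_locales (use LS fph gph f fA fAs g gA gAs i in auto)
  show ?thesis by (rule L.main)
qed

end
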